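(* In the setting of the context, the boundary maps satisfy $\Gamma^1C=V_C\Gamma^2$ and $\Gamma^2C=V_C\Gamma^1$ on $\widetilde H^1(\mathbf G;\mathbb C^2)$. Moreover, for $z\in\rho(D^0)\setminus\{m\}$, $$Q(-\overline z)=V_C\,Q(z)^{-1}\,V_C.$$
   Context: Let $m\ge0$. A finite oriented metric graph $\mathbf G$ has a finite nonempty vertex set, finite sets $\mathcal I$ (internal) and $\mathcal E$ (external) of edges, $\mathcal J=\mathcal I\cup\mathcal E\ne\emptyset$, no loops. Each internal edge $i$ is identified with $I_i=(a_i,b_i)$, $a_i$ and $b_i$ corresponding to its initial and terminal vertex. An external edge $e$ is identified with $(a_e,+\infty)$ ($\rho(e)=-1$) or $(-\infty,b_e)$ ($\rho(e)=1$), with finite endpoint $\partial e$. $\mathscr H=\bigoplus_jL^2(I_j;\mathbb C^2)$, $\widetilde H^1(\mathbf G;\mathbb C^2)=\bigoplus_jH^1(I_j;\mathbb C^2)$, $\Phi=(\phi_j)_j$, $\phi_j=(\phi_j^1,\phi_j^2)^T$. $D^{max}$ acts edgewise by $-i\sigma_1\phi_j'+m\sigma_3\phi_j$ ($\sigma_1=\begin{pmatrix}0&1\\1&0\end{pmatrix}$, $\sigma_3=\operatorname{diag}(1,-1)$). $\mathcal G=\bigoplus_j\mathcal G_j$, $\mathcal G_i=\mathbb C^2$, $\mathcal G_e=\mathbb C$; $\Gamma^k=\bigoplus_j\Gamma^k_j$, $\Gamma^1_i\Phi=(\phi_i^1(a_i),\phi_i^1(b_i))^T$, $\Gamma^2_i\Phi=(i\phi_i^2(a_i),-i\phi_i^2(b_i))^T$,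 $\Gamma^1_e\Phi=\phi_e^1(\partial e)$, $\Gamma^2_e\Phi=-i\rho(e)\phi^2_e(\partial e)$; $(\Gamma^1,\Gamma^2,\mathcal G)$ is a boundary triple for $D^{max}$, $D^0=D^{max}\upharpoonright\ker\Gamma^1$, and for $z\in\rho(D^0)$, $\gamma(z)=(\Gamma^1\upharpoonright\ker(D^{max}-z))^{-1}$ and $Q(z)=\Gamma^2\gamma(z)$. The charge conjugation is the antilinear map $C\Phi=(\sigma_1\overline{\phi_j})_j$. $V_C=\bigoplus_jV_{C,j}$ is the antilinear map on $\mathcal G$ with $V_{C,j}\omega_j=i\sigma_3\overline{\omega_j}$ for $j\in\mathcal I$ and $V_{C,j}\omega_j=-i\rho(j)\overline{\omega_j}$ for $j\in\mathcal E$. *)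

theory Defs
  imports "HOL-Analysis.Analysis"
begin

text \<open>External edge e is (lft e, +inf) if orient e = -1 and (-inf, rgt e)
  if orient e = 1. Functions on the graph: 'j => real => complex * complex
  (value outside the edge intervals is irrelevant).\<close>

record 'j mgraph =
  iedges :: "'j set"
  eedges :: "'j set"
  lft :: "'j \<Rightarrow> real"
  rgt :: "'j \<Rightarrow> real"
  orient :: "'j \<Rightarrow> real"

definition valid_graph :: "'j mgraph \<Rightarrow> bool" where
  "valid_graph G \<longleftrightarrow> finite (iedges G) \<and> finite (eedges G) \<and>
     iedges G \<inter> eedges G = {} \<and> iedges G \<union> eedges G \<noteq> {} \<and>
     (\<forall>i\<in>iedges G. lft G i < rgt G i) \<and> (\<forall>e\<in>eedges G. orient G e \<in> {-1, 1})"

definition edges :: "'j mgraph \<Rightarrow> 'j set" where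
  "edges G = iedges G \<union> eedges G"

definition edge_int :: "'j mgraph \<Rightarrow> 'j \<Rightarrow> real set" where
  "edge_int G j = (if j \<in> iedges G then {lft G j<..<rgt G j}
     else if orient G j = -1 then {lft G j<..} else {..<rgt G j})"

definition bdpt :: "'j mgraph \<Rightarrow> 'j \<Rightarrow> real" where
  "bdpt G e = (if orient G e = -1 then lft G e else rgt G e)"

definition L2_on :: "real set \<Rightarrow> (real \<Rightarrow> complex) \<Rightarrow> bool" where
  "L2_on S h \<longleftrightarrow> set_borel_measurable lborel S h \<and>
     set_integrable lborel S (\<lambda>x. (cmod (h x))\<^sup>2)"

definition weak_deriv_on :: "real set \<Rightarrow> (real \<Rightarrow> complex) \<Rightarrow> (real \<Rightarrow> complex) \<Rightarrow> bool" where
  "weak_deriv_on S g h \<longleftrightarrow> (\<forall>x\<in>S. \<forall>y\<in>S. x \<le> y \<longrightarrow>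
     set_integrable lborel {x..y} h \<and> g y - g x = (LINT t:{x..y}|lborel. h t))"

text \<open>H^1 on an interval, via its continuous representative (continuous up to the endpoints)\<close>
definition H1_on :: "real set \<Rightarrow> (real \<Rightarrow> complex) \<Rightarrow> bool" where
  "H1_on S g \<longleftrightarrow> continuous_on (closure S) g \<and> L2_on S g \<and>
     (\<exists>h. L2_on S h \<and> weak_deriv_on S g h)"

definition H1 :: "'j mgraph \<Rightarrow> ('j \<Rightarrow> real \<Rightarrow> complex \<times> complex) \<Rightarrow> bool" where
  "H1 G \<Phi> \<longleftrightarrow> (\<forall>j\<in>edges G. H1_on (edge_int G j) (\<lambda>x. fst (\<Phi> j x)) \<and>
                                H1_on (edge_int G j) (\<lambda>x. snd (\<Phi> j x)))"

definition L2H :: "'j mgraph \<Rightarrow> ('j \<Rightarrow> real \<Rightarrow> complex \<times> complex) \<Rightarrow> bool" where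
  "L2H G \<Phi> \<longleftrightarrow> (\<forall>j\<in>edges G. L2_on (edge_int G j) (\<lambda>x. fst (\<Phi> j x)) \<and>
                                L2_on (edge_int G j) (\<lambda>x. snd (\<Phi> j x)))"

definition normH :: "'j mgraph \<Rightarrow> ('j \<Rightarrow> real \<Rightarrow> complex \<times> complex) \<Rightarrow> real" where
  "normH G \<Phi> = sqrt (\<Sum>j\<in>edges G. LINT x:edge_int G j|lborel.
                         (cmod (fst (\<Phi> j x)))\<^sup>2 + (cmod (snd (\<Phi> j x)))\<^sup>2)"

definition psc :: "complex \<Rightarrow> complex \<times> complex \<Rightarrow> complex \<times> complex" where
  "psc z p = (z * fst p, z * snd p)"

text \<open>Graph of D^max: D^max Phi = Psi, edgewise -i sigma_1 Phi' + m sigma_3 Phi\<close>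
definition Dmax_rel :: "'j mgraph \<Rightarrow> real \<Rightarrow> ('j \<Rightarrow> real \<Rightarrow> complex \<times> complex)
     \<Rightarrow> ('j \<Rightarrow> real \<Rightarrow> complex \<times> complex) \<Rightarrow> bool" where
  "Dmax_rel G m \<Phi> \<Psi> \<longleftrightarrow> H1 G \<Phi> \<and> L2H G \<Psi> \<and>
     (\<forall>j\<in>edges G. \<exists>h1 h2.
        L2_on (edge_int G j) h1 \<and> L2_on (edge_int G j) h2 \<and>
        weak_deriv_on (edge_int G j) (\<lambda>x. fst (\<Phi> j x)) h1 \<and>
        weak_deriv_on (edge_int G j) (\<lambda>x. snd (\<Phi> j x)) h2 \<and>
        (AE x in lborel. x \<in> edge_int G j \<longrightarrow>
           \<Psi> j x = (- \<i> * h2 x + complex_of_real m * fst (\<Phi> j x),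
                    - \<i> * h1 x - complex_of_real m * snd (\<Phi> j x))))"

definition bspace :: "'j mgraph \<Rightarrow> ('j \<Rightarrow> complex \<times> complex) set" where
  "bspace G = {\<omega>. \<forall>j. (j \<notin> edges G \<longrightarrow> \<omega> j = (0, 0)) \<and> (j \<in> eedges G \<longrightarrow> snd (\<omega> j) = 0)}"

definition Gamma1 :: "'j mgraph \<Rightarrow> ('j \<Rightarrow> real \<Rightarrow> complex \<times> complex) \<Rightarrow> 'j \<Rightarrow> complex \<times> complex" where
  "Gamma1 G \<Phi> j = (if j \<in> iedges G then (fst (\<Phi> j (lft G j)), fst (\<Phi> j (rgt G j)))
     else if j \<in> eedges G then (fst (\<Phi> j (bdpt G j)), 0) else (0, 0))"

definition Gamma2 :: "'j mgraph \<Rightarrow> ('j \<Rightarrow> real \<Rightarrow> complex \<times> complex) \<Rightarrow> 'j \<Rightarrow> complex \<times> complex" where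
  "Gamma2 G \<Phi> j = (if j \<in> iedges G then (\<i> * snd (\<Phi> j (lft G j)), - \<i> * snd (\<Phi> j (rgt G j)))
     else if j \<in> eedges G then (- \<i> * complex_of_real (orient G j) * snd (\<Phi> j (bdpt G j)), 0)
     else (0, 0))"

definition VC :: "'j mgraph \<Rightarrow> ('j \<Rightarrow> complex \<times> complex) \<Rightarrow> 'j \<Rightarrow> complex \<times> complex" where
  "VC G \<omega> j = (if j \<in> iedges G then (\<i> * cnj (fst (\<omega> j)), - \<i> * cnj (snd (\<omega> j)))
     else if j \<in> eedges G then (- \<i> * complex_of_real (orient G j) * cnj (fst (\<omega> j)), 0)
     else (0, 0))"

definition chargeC :: "('j \<Rightarrow> real \<Rightarrow> complex \<times> complex) \<Rightarrow> 'j \<Rightarrow> real \<Rightarrow> complex \<times> complex" where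
  "chargeC \<Phi> j x = (cnj (snd (\<Phi> j x)), cnj (fst (\<Phi> j x)))"

definition D0_rel :: "'j mgraph \<Rightarrow> real \<Rightarrow> ('j \<Rightarrow> real \<Rightarrow> complex \<times> complex)
     \<Rightarrow> ('j \<Rightarrow> real \<Rightarrow> complex \<times> complex) \<Rightarrow> bool" where
  "D0_rel G m \<Phi> \<Psi> \<longleftrightarrow> Dmax_rel G m \<Phi> \<Psi> \<and> Gamma1 G \<Phi> = (\<lambda>j. (0, 0))"

definition resolvent_D0 :: "'j mgraph \<Rightarrow> real \<Rightarrow> complex set" where
  "resolvent_D0 G m = {z.
     (\<forall>\<Psi>. L2H G \<Psi> \<longrightarrow> (\<exists>\<Phi>. D0_rel G m \<Phi> (\<lambda>j x. \<Psi> j x + psc z (\<Phi> j x)))) \<and>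
     (\<exists>c. \<forall>\<Phi> \<Psi>. L2H G \<Psi> \<and> D0_rel G m \<Phi> (\<lambda>j x. \<Psi> j x + psc z (\<Phi> j x))
                 \<longrightarrow> normH G \<Phi> \<le> c * normH G \<Psi>)}"

text \<open>Weyl function Q(z) = Gamma2 gamma(z), gamma(z) = (Gamma1 restricted to ker(D^max - z))^-1\<close>
definition Qfun :: "'j mgraph \<Rightarrow> real \<Rightarrow> complex \<Rightarrow> ('j \<Rightarrow> complex \<times> complex) \<Rightarrow> 'j \<Rightarrow> complex \<times> complex" where
  "Qfun G m z \<omega> = (THE \<eta>. \<exists>\<Phi>. Dmax_rel G m \<Phi> (\<lambda>j x. psc z (\<Phi> j x)) \<and>
                              Gamma1 G \<Phi> = \<omega> \<and> Gamma2 G \<Phi> = \<eta>)"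

end

theory Submission
  imports Defs
begin


lemma L2_on_alt: "L2_on S h \<longleftrightarrow> (\<lambda>x. indicator S x *\<^sub>R h x) \<in> borel_measurable lborel \<and>
   integrable lborel (\<lambda>x. (cmod (indicator S x *\<^sub>R h x))\<^sup>2)"
proof -
  have "(\<lambda>x. indicator S x *\<^sub>R (cmod (h x))\<^sup>2) = (\<lambda>x. (cmod (indicator S x *\<^sub>R h x))\<^sup>2)"
    by (auto simp: indicator_def fun_eq_iff)
  then show ?thesis unfolding L2_on_def set_borel_measurable_def set_integrable_def by simp
qed

lemma cmod_add_sq: "(cmod (u + v))\<^sup>2 \<le> 2 * (cmod u)\<^sup>2 + 2 * (cmod v)\<^sup>2"
proof -
  have "cmod (u + v) \<le> cmod u + cmod v" by (rule norm_triangle_ineq)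
  then have "(cmod (u + v))\<^sup>2 \<le> (cmod u + cmod v)\<^sup>2" by (simp add: power_mono)
  also have "\<dots> \<le> 2 * (cmod u)\<^sup>2 + 2 * (cmod v)\<^sup>2"
  proof -
    have "0 \<le> (cmod u - cmod v)\<^sup>2" by simp
    then show ?thesis by (simp add: power2_sum power2_diff)
  qed
  finally show ?thesis .
qed

lemma L2_lin: assumes "L2_on S f" "L2_on S g" shows "L2_on S (\<lambda>x. a * f x + b * g x)"
proof -
  define F1 where "F1 = (\<lambda>x. indicator S x *\<^sub>R f x)"
  define F2 where "F2 = (\<lambda>x. indicator S x *\<^sub>R g x)"
  have m1: "F1 \<in> borel_measurable lborel" and i1: "integrable lborel (\<lambda>x. (cmod (F1 x))\<^sup>2)"
    using assms(1) by (auto simp: L2_on_alt F1_def)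
  have m2: "F2 \<in> borel_measurable lborel" and i2: "integrable lborel (\<lambda>x. (cmod (F2 x))\<^sup>2)"
    using assms(2) by (auto simp: L2_on_alt F2_def)
  have e: "(\<lambda>x. indicator S x *\<^sub>R (a * f x + b * g x)) = (\<lambda>x. a * F1 x + b * F2 x)"
    by (auto simp: F1_def F2_def indicator_def fun_eq_iff)
  have m: "(\<lambda>x. a * F1 x + b * F2 x) \<in> borel_measurable lborel"
    by (rule borel_measurable_add[OF borel_measurable_times[OF borel_measurable_const m1] borel_measurable_times[OF borel_measurable_const m2]])
  have ib: "integrable lborel (\<lambda>x. 2 * (cmod a)\<^sup>2 * (cmod (F1 x))\<^sup>2 + 2 * (cmod b)\<^sup>2 * (cmod (F2 x))\<^sup>2)"
    by (rule Bochner_Integration.integrable_add[OF integrable_mult_right[OF i1] integrable_mult_right[OF i2]])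
  have mb: "(\<lambda>x. (cmod (a * F1 x + b * F2 x))\<^sup>2) \<in> borel_measurable lborel"
    by (rule borel_measurable_power[OF measurable_compose[OF m borel_measurable_norm]])
  have ab: "AE x in lborel. norm ((cmod (a * F1 x + b * F2 x))\<^sup>2)
          \<le> norm (2 * (cmod a)\<^sup>2 * (cmod (F1 x))\<^sup>2 + 2 * (cmod b)\<^sup>2 * (cmod (F2 x))\<^sup>2)"
  proof (rule AE_I2)
    fix x
    have "(cmod (a * F1 x + b * F2 x))\<^sup>2 \<le> 2 * (cmod (a * F1 x))\<^sup>2 + 2 * (cmod (b * F2 x))\<^sup>2"
      by (rule cmod_add_sq)
    then show "norm ((cmod (a * F1 x + b * F2 x))\<^sup>2)
          \<le> norm (2 * (cmod a)\<^sup>2 * (cmod (F1 x))\<^sup>2 + 2 * (cmod b)\<^sup>2 * (cmod (F2 x))\<^sup>2)"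
      by (simp add: norm_mult power_mult_distrib)
  qed
  have ii: "integrable lborel (\<lambda>x. (cmod (a * F1 x + b * F2 x))\<^sup>2)"
    by (rule Bochner_Integration.integrable_bound[OF ib mb ab])
  have e': "\<And>x. indicator S x *\<^sub>R (a * f x + b * g x) = a * F1 x + b * F2 x"
    using e by metis
  show ?thesis using m ii by (simp only: L2_on_alt e')
qed

lemma L2_cnj: assumes "L2_on S f" shows "L2_on S (\<lambda>x. cnj (f x))"
proof -
  have e: "\<And>x. indicator S x *\<^sub>R cnj (f x) = cnj (indicator S x *\<^sub>R f x)"
    by (simp add: indicator_def)
  have m: "(\<lambda>x. indicator S x *\<^sub>R f x) \<in> borel_measurable lborel"
    and i: "integrable lborel (\<lambda>x. (cmod (indicator S x *\<^sub>R f x))\<^sup>2)"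
    using assms unfolding L2_on_alt by (rule conjunct1, rule conjunct2)
  have c: "cnj \<in> borel_measurable borel"
    by (rule borel_measurable_continuous_onI) (rule continuous_on_cnj[OF continuous_on_id])
  have m2: "(\<lambda>x. cnj (indicator S x *\<^sub>R f x)) \<in> borel_measurable lborel"
    using measurable_compose[OF m c] by (simp add: o_def)
  show ?thesis using m2 i by (simp only: L2_on_alt e complex_mod_cnj)
qed

lemma L2_zero: "L2_on S (\<lambda>x. 0)"
  by (simp add: L2_on_alt)


lemma WD_lin: assumes "weak_deriv_on S g1 h1" "weak_deriv_on S g2 h2"
  shows "weak_deriv_on S (\<lambda>x. a * g1 x + b * g2 x) (\<lambda>x. a * h1 x + b * h2 x)"
  unfolding weak_deriv_on_def
proof (intro ballI impI conjI)
  fix x y assume xy: "x \<in> S" "y \<in> S" "x \<le> y"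
  have i1: "set_integrable lborel {x..y} h1" and e1: "g1 y - g1 x = (LINT t:{x..y}|lborel. h1 t)"
    using assms(1) xy unfolding weak_deriv_on_def by blast+
  have i2: "set_integrable lborel {x..y} h2" and e2: "g2 y - g2 x = (LINT t:{x..y}|lborel. h2 t)"
    using assms(2) xy unfolding weak_deriv_on_def by blast+
  have ia: "set_integrable lborel {x..y} (\<lambda>t. a * h1 t)" by (rule set_integrable_mult_right[OF i1])
  have ib: "set_integrable lborel {x..y} (\<lambda>t. b * h2 t)" by (rule set_integrable_mult_right[OF i2])
  show "set_integrable lborel {x..y} (\<lambda>t. a * h1 t + b * h2 t)"
    by (rule set_integral_add(1)[OF ia ib])
  have "(LINT t:{x..y}|lborel. a * h1 t + b * h2 t) = (LINT t:{x..y}|lborel. a * h1 t) + (LINT t:{x..y}|lborel. b * h2 t)"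
    by (rule set_integral_add(2)[OF ia ib])
  also have "\<dots> = a * (g1 y - g1 x) + b * (g2 y - g2 x)"
    by (simp only: set_integral_mult_right e1 e2)
  finally show "a * g1 y + b * g2 y - (a * g1 x + b * g2 x) = (LINT t:{x..y}|lborel. a * h1 t + b * h2 t)"
    by (simp add: algebra_simps)
qed

lemma WD_cnj: assumes "weak_deriv_on S g h"
  shows "weak_deriv_on S (\<lambda>x. cnj (g x)) (\<lambda>x. cnj (h x))"
  unfolding weak_deriv_on_def
proof (intro ballI impI conjI)
  fix x y assume xy: "x \<in> S" "y \<in> S" "x \<le> y"
  have i1: "set_integrable lborel {x..y} h" and e1: "g y - g x = (LINT t:{x..y}|lborel. h t)"
    using assms(1) xy unfolding weak_deriv_on_def by blast+
  have e: "\<And>t. indicator {x..y} t *\<^sub>R cnj (h t) = cnj (indicator {x..y} t *\<^sub>R h t)"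
    by (simp add: indicator_def)
  show "set_integrable lborel {x..y} (\<lambda>t. cnj (h t))"
    using integrable_cnj[OF i1[unfolded set_integrable_def]] unfolding set_integrable_def e .
  have "(LINT t:{x..y}|lborel. cnj (h t)) = cnj (LINT t:{x..y}|lborel. h t)"
    unfolding set_lebesgue_integral_def e by (rule Bochner_Integration.integral_cnj)
  then show "cnj (g y) - cnj (g x) = (LINT t:{x..y}|lborel. cnj (h t))"
    by (simp add: e1[symmetric])
qed

definition W :: "real set \<Rightarrow> (real \<Rightarrow> complex) \<Rightarrow> (real \<Rightarrow> complex) \<Rightarrow> bool" where
  "W S g h \<longleftrightarrow> continuous_on (closure S) g \<and> L2_on S g \<and> L2_on S h \<and> weak_deriv_on S g h"

lemma W_lin: assumes "W S g1 h1" "W S g2 h2"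
  shows "W S (\<lambda>x. a * g1 x + b * g2 x) (\<lambda>x. a * h1 x + b * h2 x)"
proof -
  have c1: "continuous_on (closure S) g1" and c2: "continuous_on (closure S) g2"
    using assms unfolding W_def by blast+
  have "continuous_on (closure S) (\<lambda>x. a * g1 x + b * g2 x)"
    by (rule continuous_on_add[OF continuous_on_mult[OF continuous_on_const c1] continuous_on_mult[OF continuous_on_const c2]])
  moreover have "L2_on S (\<lambda>x. a * g1 x + b * g2 x)"
    using assms unfolding W_def by (intro L2_lin) blast+
  moreover have "L2_on S (\<lambda>x. a * h1 x + b * h2 x)"
    using assms unfolding W_def by (intro L2_lin) blast+
  moreover have "weak_deriv_on S (\<lambda>x. a * g1 x + b * g2 x) (\<lambda>x. a * h1 x + b * h2 x)"
    using assms unfolding W_def by (intro WD_lin) blast+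
  ultimately show ?thesis unfolding W_def by blast
qed

lemma W_cnj: assumes "W S g h" shows "W S (\<lambda>x. cnj (g x)) (\<lambda>x. cnj (h x))"
proof -
  have c1: "continuous_on (closure S) g" using assms unfolding W_def by blast
  have "continuous_on (closure S) (\<lambda>x. cnj (g x))" by (rule continuous_on_cnj[OF c1])
  moreover have "L2_on S (\<lambda>x. cnj (g x))" "L2_on S (\<lambda>x. cnj (h x))"
    using assms unfolding W_def by (blast intro: L2_cnj)+
  moreover have "weak_deriv_on S (\<lambda>x. cnj (g x)) (\<lambda>x. cnj (h x))"
    using assms unfolding W_def by (blast intro: WD_cnj)
  ultimately show ?thesis unfolding W_def by blast
qed

lemma W_zero: "W S (\<lambda>x. 0) (\<lambda>x. 0)"
  unfolding W_def weak_deriv_on_def set_integrable_def by (simp add: L2_zero)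


lemma L2_lin4: assumes "L2_on S f1" "L2_on S f2" "L2_on S f3" "L2_on S f4"
  shows "L2_on S (\<lambda>x. a1 * f1 x + a2 * f2 x + a3 * f3 x + a4 * f4 x)"
proof -
  have "L2_on S (\<lambda>x. 1 * (a1 * f1 x + a2 * f2 x) + 1 * (a3 * f3 x + a4 * f4 x))"
    by (rule L2_lin[OF L2_lin[OF assms(1,2)] L2_lin[OF assms(3,4)]])
  then show ?thesis by (simp add: add.assoc)
qed

lemma L2H_lin: assumes "L2H G \<Phi>" "L2H G \<Psi>" shows
  "L2H G (\<lambda>j x. (a1 * fst (\<Phi> j x) + a2 * snd (\<Phi> j x) + a3 * fst (\<Psi> j x) + a4 * snd (\<Psi> j x),
                 b1 * fst (\<Phi> j x) + b2 * snd (\<Phi> j x) + b3 * fst (\<Psi> j x) + b4 * snd (\<Psi> j x)))"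
  unfolding L2H_def fst_conv snd_conv
proof (intro ballI conjI)
  fix j assume j: "j \<in> edges G"
  have l: "L2_on (edge_int G j) (\<lambda>x. fst (\<Phi> j x))" "L2_on (edge_int G j) (\<lambda>x. snd (\<Phi> j x))"
    "L2_on (edge_int G j) (\<lambda>x. fst (\<Psi> j x))" "L2_on (edge_int G j) (\<lambda>x. snd (\<Psi> j x))"
    using assms j unfolding L2H_def by blast+
  show "L2_on (edge_int G j) (\<lambda>x. a1 * fst (\<Phi> j x) + a2 * snd (\<Phi> j x) + a3 * fst (\<Psi> j x) + a4 * snd (\<Psi> j x))"
    by (rule L2_lin4[OF l])
  show "L2_on (edge_int G j) (\<lambda>x. b1 * fst (\<Phi> j x) + b2 * snd (\<Phi> j x) + b3 * fst (\<Psi> j x) + b4 * snd (\<Psi> j x))"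
    by (rule L2_lin4[OF l])
qed

lemma L2H_cnj: assumes "L2H G \<Phi>" shows "L2H G (\<lambda>j x. (cnj (fst (\<Phi> j x)), cnj (snd (\<Phi> j x))))"
  using assms unfolding L2H_def fst_conv snd_conv
proof (intro ballI conjI)
  fix j assume "\<forall>j\<in>edges G. L2_on (edge_int G j) (\<lambda>x. fst (\<Phi> j x)) \<and> L2_on (edge_int G j) (\<lambda>x. snd (\<Phi> j x))"
    "j \<in> edges G"
  then have "L2_on (edge_int G j) (\<lambda>x. fst (\<Phi> j x))" "L2_on (edge_int G j) (\<lambda>x. snd (\<Phi> j x))" by blast+
  then show "L2_on (edge_int G j) (\<lambda>x. cnj (fst (\<Phi> j x)))" "L2_on (edge_int G j) (\<lambda>x. cnj (snd (\<Phi> j x)))"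
    by (simp_all add: L2_cnj)
qed

lemma L2H_cong: "L2H G \<Psi> \<Longrightarrow> \<Psi> = \<Psi>' \<Longrightarrow> L2H G \<Psi>'"
  by simp

lemma Dmax_rel_iff: "Dmax_rel G m \<Phi> \<Psi> \<longleftrightarrow> L2H G \<Psi> \<and>
   (\<forall>j\<in>edges G. \<exists>h1 h2. W (edge_int G j) (\<lambda>x. fst (\<Phi> j x)) h1 \<and>
        W (edge_int G j) (\<lambda>x. snd (\<Phi> j x)) h2 \<and>
        (AE x in lborel. x \<in> edge_int G j \<longrightarrow>
           \<Psi> j x = (- \<i> * h2 x + complex_of_real m * fst (\<Phi> j x),
                    - \<i> * h1 x - complex_of_real m * snd (\<Phi> j x))))"
  (is "?L \<longleftrightarrow> ?R")
proof
  assume L: ?L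
  have L2: "L2H G \<Psi>" using L unfolding Dmax_rel_def by blast
  show ?R
  proof (intro conjI ballI L2)
    fix j assume j: "j \<in> edges G"
    have H: "H1_on (edge_int G j) (\<lambda>x. fst (\<Phi> j x))" "H1_on (edge_int G j) (\<lambda>x. snd (\<Phi> j x))"
      using L j unfolding Dmax_rel_def H1_def by blast+
    obtain h1 h2 where h: "L2_on (edge_int G j) h1" "L2_on (edge_int G j) h2"
        "weak_deriv_on (edge_int G j) (\<lambda>x. fst (\<Phi> j x)) h1"
        "weak_deriv_on (edge_int G j) (\<lambda>x. snd (\<Phi> j x)) h2"
        "AE x in lborel. x \<in> edge_int G j \<longrightarrow>
           \<Psi> j x = (- \<i> * h2 x + complex_of_real m * fst (\<Phi> j x),
                    - \<i> * h1 x - complex_of_real m * snd (\<Phi> j x))"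
      using L j unfolding Dmax_rel_def by blast
    have "W (edge_int G j) (\<lambda>x. fst (\<Phi> j x)) h1" "W (edge_int G j) (\<lambda>x. snd (\<Phi> j x)) h2"
      using H h(1-4) unfolding W_def H1_on_def by blast+
    then show "\<exists>h1 h2. W (edge_int G j) (\<lambda>x. fst (\<Phi> j x)) h1 \<and>
        W (edge_int G j) (\<lambda>x. snd (\<Phi> j x)) h2 \<and>
        (AE x in lborel. x \<in> edge_int G j \<longrightarrow>
           \<Psi> j x = (- \<i> * h2 x + complex_of_real m * fst (\<Phi> j x),
                    - \<i> * h1 x - complex_of_real m * snd (\<Phi> j x)))"
      using h(5) by blast
  qed
next
  assume R: ?R
  have "H1 G \<Phi>" unfolding H1_def
  proof (intro ballI conjI)
    fix j assume j: "j \<in> edges G"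
    obtain h1 h2 where "W (edge_int G j) (\<lambda>x. fst (\<Phi> j x)) h1" "W (edge_int G j) (\<lambda>x. snd (\<Phi> j x)) h2"
      using R j by blast
    then show "H1_on (edge_int G j) (\<lambda>x. fst (\<Phi> j x))" "H1_on (edge_int G j) (\<lambda>x. snd (\<Phi> j x))"
      unfolding W_def H1_on_def by blast+
  qed
  moreover have "\<forall>j\<in>edges G. \<exists>h1 h2.
        L2_on (edge_int G j) h1 \<and> L2_on (edge_int G j) h2 \<and>
        weak_deriv_on (edge_int G j) (\<lambda>x. fst (\<Phi> j x)) h1 \<and>
        weak_deriv_on (edge_int G j) (\<lambda>x. snd (\<Phi> j x)) h2 \<and>
        (AE x in lborel. x \<in> edge_int G j \<longrightarrow>
           \<Psi> j x = (- \<i> * h2 x + complex_of_real m * fst (\<Phi> j x),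
                    - \<i> * h1 x - complex_of_real m * snd (\<Phi> j x)))"
  proof
    fix j assume j: "j \<in> edges G"
    obtain h1 h2 where "W (edge_int G j) (\<lambda>x. fst (\<Phi> j x)) h1" "W (edge_int G j) (\<lambda>x. snd (\<Phi> j x)) h2"
        "AE x in lborel. x \<in> edge_int G j \<longrightarrow>
           \<Psi> j x = (- \<i> * h2 x + complex_of_real m * fst (\<Phi> j x),
                    - \<i> * h1 x - complex_of_real m * snd (\<Phi> j x))"
      using R j by blast
    then show "\<exists>h1 h2.
        L2_on (edge_int G j) h1 \<and> L2_on (edge_int G j) h2 \<and>
        weak_deriv_on (edge_int G j) (\<lambda>x. fst (\<Phi> j x)) h1 \<and>
        weak_deriv_on (edge_int G j) (\<lambda>x. snd (\<Phi> j x)) h2 \<and>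
        (AE x in lborel. x \<in> edge_int G j \<longrightarrow>
           \<Psi> j x = (- \<i> * h2 x + complex_of_real m * fst (\<Phi> j x),
                    - \<i> * h1 x - complex_of_real m * snd (\<Phi> j x)))"
      unfolding W_def by blast
  qed
  ultimately show ?L using R unfolding Dmax_rel_def by blast
qed


lemma H1_L2H: "H1 G \<Phi> \<Longrightarrow> L2H G \<Phi>"
  by (auto simp: H1_def L2H_def H1_on_def)

lemma Dmax_lin: assumes D: "Dmax_rel G m \<Phi> \<Psi>" shows
  "Dmax_rel G m (\<lambda>j x. (a * fst (\<Phi> j x) + b * snd (\<Phi> j x), c * fst (\<Phi> j x) + d * snd (\<Phi> j x)))
     (\<lambda>j x. (c * (snd (\<Psi> j x) + complex_of_real m * snd (\<Phi> j x))
              + d * (fst (\<Psi> j x) - complex_of_real m * fst (\<Phi> j x))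
              + complex_of_real m * (a * fst (\<Phi> j x) + b * snd (\<Phi> j x)),
            a * (snd (\<Psi> j x) + complex_of_real m * snd (\<Phi> j x))
              + b * (fst (\<Psi> j x) - complex_of_real m * fst (\<Phi> j x))
              - complex_of_real m * (c * fst (\<Phi> j x) + d * snd (\<Phi> j x))))"
  (is "Dmax_rel G m ?P ?Q")
proof -
  let ?M = "complex_of_real m"
  have LP: "L2H G \<Phi>" "L2H G \<Psi>" using D unfolding Dmax_rel_def by (blast intro: H1_L2H)+
  have "L2H G ?Q"
    using L2H_lin[OF LP, of "?M * a - d * ?M" "c * ?M + ?M * b" d c "- (b * ?M) - ?M * c" "a * ?M - ?M * d" b a]
    by (rule L2H_cong) (simp add: fun_eq_iff algebra_simps)
  moreover have "\<forall>j\<in>edges G. \<exists>h1 h2. W (edge_int G j) (\<lambda>x. fst (?P j x)) h1 \<and>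
        W (edge_int G j) (\<lambda>x. snd (?P j x)) h2 \<and>
        (AE x in lborel. x \<in> edge_int G j \<longrightarrow>
           ?Q j x = (- \<i> * h2 x + ?M * fst (?P j x), - \<i> * h1 x - ?M * snd (?P j x)))"
  proof
    fix j assume j: "j \<in> edges G"
    obtain h1 h2 where h: "W (edge_int G j) (\<lambda>x. fst (\<Phi> j x)) h1" "W (edge_int G j) (\<lambda>x. snd (\<Phi> j x)) h2"
        "AE x in lborel. x \<in> edge_int G j \<longrightarrow>
           \<Psi> j x = (- \<i> * h2 x + ?M * fst (\<Phi> j x), - \<i> * h1 x - ?M * snd (\<Phi> j x))"
      using D j unfolding Dmax_rel_iff by blast
    have w1: "W (edge_int G j) (\<lambda>x. fst (?P j x)) (\<lambda>x. a * h1 x + b * h2 x)"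
      using W_lin[OF h(1,2), of a b] by simp
    have w2: "W (edge_int G j) (\<lambda>x. snd (?P j x)) (\<lambda>x. c * h1 x + d * h2 x)"
      using W_lin[OF h(1,2), of c d] by simp
    have "AE x in lborel. x \<in> edge_int G j \<longrightarrow>
           ?Q j x = (- \<i> * (c * h1 x + d * h2 x) + ?M * fst (?P j x), - \<i> * (a * h1 x + b * h2 x) - ?M * snd (?P j x))"
      using h(3) by (rule eventually_mono) (simp add: algebra_simps)
    then show "\<exists>h1 h2. W (edge_int G j) (\<lambda>x. fst (?P j x)) h1 \<and>
        W (edge_int G j) (\<lambda>x. snd (?P j x)) h2 \<and>
        (AE x in lborel. x \<in> edge_int G j \<longrightarrow>
           ?Q j x = (- \<i> * h2 x + ?M * fst (?P j x), - \<i> * h1 x - ?M * snd (?P j x)))"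
      using w1 w2 by blast
  qed
  ultimately show ?thesis unfolding Dmax_rel_iff by blast
qed


lemma Dmax_cnj: assumes D: "Dmax_rel G m \<Phi> \<Psi>" shows
   "Dmax_rel G m (\<lambda>j x. (cnj (fst (\<Phi> j x)), cnj (snd (\<Phi> j x))))
     (\<lambda>j x. (- cnj (fst (\<Psi> j x)) + 2 * complex_of_real m * cnj (fst (\<Phi> j x)),
            - cnj (snd (\<Psi> j x)) - 2 * complex_of_real m * cnj (snd (\<Phi> j x))))"
  (is "Dmax_rel G m ?P ?Q")
proof -
  let ?M = "complex_of_real m"
  have LP: "L2H G \<Phi>" "L2H G \<Psi>" using D unfolding Dmax_rel_def by (blast intro: H1_L2H)+
  have "L2H G ?Q"
    using L2H_lin[OF L2H_cnj[OF LP(1)] L2H_cnj[OF LP(2)], of "2 * ?M" 0 "-1" 0 0 "- 2 * ?M" 0 "-1"]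
    by (rule L2H_cong) (simp add: fun_eq_iff algebra_simps)
  moreover have "\<forall>j\<in>edges G. \<exists>h1 h2. W (edge_int G j) (\<lambda>x. fst (?P j x)) h1 \<and>
        W (edge_int G j) (\<lambda>x. snd (?P j x)) h2 \<and>
        (AE x in lborel. x \<in> edge_int G j \<longrightarrow>
           ?Q j x = (- \<i> * h2 x + ?M * fst (?P j x), - \<i> * h1 x - ?M * snd (?P j x)))"
  proof
    fix j assume j: "j \<in> edges G"
    obtain h1 h2 where h: "W (edge_int G j) (\<lambda>x. fst (\<Phi> j x)) h1" "W (edge_int G j) (\<lambda>x. snd (\<Phi> j x)) h2"
        "AE x in lborel. x \<in> edge_int G j \<longrightarrow>
           \<Psi> j x = (- \<i> * h2 x + ?M * fst (\<Phi> j x), - \<i> * h1 x - ?M * snd (\<Phi> j x))"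
      using D j unfolding Dmax_rel_iff by blast
    have w1: "W (edge_int G j) (\<lambda>x. fst (?P j x)) (\<lambda>x. cnj (h1 x))"
      using W_cnj[OF h(1)] by simp
    have w2: "W (edge_int G j) (\<lambda>x. snd (?P j x)) (\<lambda>x. cnj (h2 x))"
      using W_cnj[OF h(2)] by simp
    have "AE x in lborel. x \<in> edge_int G j \<longrightarrow>
           ?Q j x = (- \<i> * cnj (h2 x) + ?M * fst (?P j x), - \<i> * cnj (h1 x) - ?M * snd (?P j x))"
      using h(3) by (rule eventually_mono) (simp add: algebra_simps)
    then show "\<exists>h1 h2. W (edge_int G j) (\<lambda>x. fst (?P j x)) h1 \<and>
        W (edge_int G j) (\<lambda>x. snd (?P j x)) h2 \<and>
        (AE x in lborel. x \<in> edge_int G j \<longrightarrow>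
           ?Q j x = (- \<i> * h2 x + ?M * fst (?P j x), - \<i> * h1 x - ?M * snd (?P j x)))"
      using w1 w2 by blast
  qed
  ultimately show ?thesis unfolding Dmax_rel_iff by blast
qed

lemma Dmax_add: assumes D: "Dmax_rel G m \<Phi> \<Psi>" and D': "Dmax_rel G m \<Phi>' \<Psi>'" shows
   "Dmax_rel G m (\<lambda>j x. \<Phi> j x + \<Phi>' j x) (\<lambda>j x. \<Psi> j x + \<Psi>' j x)"
  (is "Dmax_rel G m ?P ?Q")
proof -
  let ?M = "complex_of_real m"
  have LP: "L2H G \<Psi>" "L2H G \<Psi>'" using D D' unfolding Dmax_rel_def by blast+
  have "L2H G ?Q"
    using L2H_lin[OF LP, of 1 0 1 0 0 1 0 1]
    by (rule L2H_cong) (simp add: fun_eq_iff prod_eq_iff)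
  moreover have "\<forall>j\<in>edges G. \<exists>h1 h2. W (edge_int G j) (\<lambda>x. fst (?P j x)) h1 \<and>
        W (edge_int G j) (\<lambda>x. snd (?P j x)) h2 \<and>
        (AE x in lborel. x \<in> edge_int G j \<longrightarrow>
           ?Q j x = (- \<i> * h2 x + ?M * fst (?P j x), - \<i> * h1 x - ?M * snd (?P j x)))"
  proof
    fix j assume j: "j \<in> edges G"
    obtain h1 h2 where h: "W (edge_int G j) (\<lambda>x. fst (\<Phi> j x)) h1" "W (edge_int G j) (\<lambda>x. snd (\<Phi> j x)) h2"
        "AE x in lborel. x \<in> edge_int G j \<longrightarrow>
           \<Psi> j x = (- \<i> * h2 x + ?M * fst (\<Phi> j x), - \<i> * h1 x - ?M * snd (\<Phi> j x))"
      using D j unfolding Dmax_rel_iff by blast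
    obtain k1 k2 where k: "W (edge_int G j) (\<lambda>x. fst (\<Phi>' j x)) k1" "W (edge_int G j) (\<lambda>x. snd (\<Phi>' j x)) k2"
        "AE x in lborel. x \<in> edge_int G j \<longrightarrow>
           \<Psi>' j x = (- \<i> * k2 x + ?M * fst (\<Phi>' j x), - \<i> * k1 x - ?M * snd (\<Phi>' j x))"
      using D' j unfolding Dmax_rel_iff by blast
    have w1: "W (edge_int G j) (\<lambda>x. fst (?P j x)) (\<lambda>x. 1 * h1 x + 1 * k1 x)"
      using W_lin[OF h(1) k(1), of 1 1] by simp
    have w2: "W (edge_int G j) (\<lambda>x. snd (?P j x)) (\<lambda>x. 1 * h2 x + 1 * k2 x)"
      using W_lin[OF h(2) k(2), of 1 1] by simp
    have "AE x in lborel. x \<in> edge_int G j \<longrightarrow>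
           ?Q j x = (- \<i> * (1 * h2 x + 1 * k2 x) + ?M * fst (?P j x), - \<i> * (1 * h1 x + 1 * k1 x) - ?M * snd (?P j x))"
      using eventually_conj[OF h(3) k(3)] by (rule eventually_mono) (simp add: algebra_simps)
    then show "\<exists>h1 h2. W (edge_int G j) (\<lambda>x. fst (?P j x)) h1 \<and>
        W (edge_int G j) (\<lambda>x. snd (?P j x)) h2 \<and>
        (AE x in lborel. x \<in> edge_int G j \<longrightarrow>
           ?Q j x = (- \<i> * h2 x + ?M * fst (?P j x), - \<i> * h1 x - ?M * snd (?P j x)))"
      using w1 w2 by blast
  qed
  ultimately show ?thesis unfolding Dmax_rel_iff by blast
qed


lemma zero_from_integral:
  fixes F :: "real \<Rightarrow> real"
  assumes S: "open S" and c: "continuous_on (closure S) F" and nn: "\<And>x. x \<in> closure S \<Longrightarrow> 0 \<le> F x"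
    and i: "set_integrable lborel S F" and le: "(LINT x:S|lborel. F x) \<le> 0"
    and x: "x \<in> closure S"
  shows "F x = 0"
proof -
  have inS: "F y = 0" if y: "y \<in> S" for y
  proof -
    obtain d where d: "d > 0" "cball y d \<subseteq> S" using S y open_contains_cball by blast
    have C: "cball y d = {y - d..y + d}" by (auto simp: cball_def dist_real_def)
    have iS: "F integrable_on S" and eS: "(LINT x:S|lborel. F x) = integral S F"
      using set_borel_integral_eq_integral[OF i] by blast+
    have cC: "continuous_on {y - d..y + d} F"
    proof (rule continuous_on_subset[OF c])
      show "{y - d..y + d} \<subseteq> closure S" using d(2) C closure_subset[of S] by simp
    qed
    have iC: "F integrable_on {y - d..y + d}" by (rule integrable_continuous_interval[OF cC])
    have nnS: "\<forall>x\<in>S. 0 \<le> F x" using nn closure_subset by blast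
    have "integral {y - d..y + d} F \<le> integral S F"
      using integral_subset_le[OF _ iC iS nnS] d(2) C by simp
    moreover have "0 \<le> integral {y - d..y + d} F"
    proof (rule Henstock_Kurzweil_Integration.integral_nonneg[OF iC])
      fix x assume "x \<in> {y - d..y + d}"
      then have "x \<in> S" using d(2) C by blast
      then show "0 \<le> F x" using nnS by blast
    qed
    ultimately have z: "integral {y - d..y + d} F = 0" using le eS by linarith
    have cl: "closure {y - d<..<y + d} = {y - d..y + d}" using d(1) by simp
    have hi: "(F has_integral 0) (closure {y - d<..<y + d})"
      using integrable_integral[OF iC] z cl by simp
    show "F y = 0"
    proof (rule has_integral_0_closure_imp_0[OF _ _ _ _ _ _ hi])
      show "continuous_on (closure {y - d<..<y + d}) F" using cC cl by simp
      show "\<And>x. x \<in> {y - d<..<y + d} \<Longrightarrow> 0 \<le> F x"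
      proof -
        fix x assume "x \<in> {y - d<..<y + d}"
        then have "x \<in> S" using d(2) C by auto
        then show "0 \<le> F x" using nnS by blast
      qed
      show "0 < emeasure lborel {y - d<..<y + d}" using d(1) by simp
      show "emeasure lborel {y - d<..<y + d} < \<infinity>" using d(1) by simp
      show "emeasure lborel (closure {y - d<..<y + d}) = emeasure lborel {y - d<..<y + d}"
        using d(1) cl by simp
      show "open {y - d<..<y + d}" by simp
      show "y \<in> closure {y - d<..<y + d}" using d(1) cl by simp
    qed
  qed
  show ?thesis by (rule continuous_constant_on_closure[OF c inS x])
qed


lemma L2H_sq_int: assumes "L2H G \<Phi>" "j \<in> edges G"
  shows "set_integrable lborel (edge_int G j) (\<lambda>x. (cmod (fst (\<Phi> j x)))\<^sup>2 + (cmod (snd (\<Phi> j x)))\<^sup>2)"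
proof -
  have "L2_on (edge_int G j) (\<lambda>x. fst (\<Phi> j x))" "L2_on (edge_int G j) (\<lambda>x. snd (\<Phi> j x))"
    using assms unfolding L2H_def by blast+
  then have "set_integrable lborel (edge_int G j) (\<lambda>x. (cmod (fst (\<Phi> j x)))\<^sup>2)"
    "set_integrable lborel (edge_int G j) (\<lambda>x. (cmod (snd (\<Phi> j x)))\<^sup>2)"
    unfolding L2_on_def by blast+
  then show ?thesis by (rule set_integral_add(1))
qed

lemma normH_le: assumes "L2H G \<Phi>" "L2H G \<Phi>'" "K \<ge> 0"
  "\<And>j x. j \<in> edges G \<Longrightarrow> x \<in> edge_int G j \<Longrightarrow>
     (cmod (fst (\<Phi>' j x)))\<^sup>2 + (cmod (snd (\<Phi>' j x)))\<^sup>2 \<le> K * ((cmod (fst (\<Phi> j x)))\<^sup>2 + (cmod (snd (\<Phi> j x)))\<^sup>2)"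
  shows "normH G \<Phi>' \<le> sqrt K * normH G \<Phi>"
proof -
  define I where "I = (\<lambda>j. LINT x:edge_int G j|lborel. (cmod (fst (\<Phi> j x)))\<^sup>2 + (cmod (snd (\<Phi> j x)))\<^sup>2)"
  define I' where "I' = (\<lambda>j. LINT x:edge_int G j|lborel. (cmod (fst (\<Phi>' j x)))\<^sup>2 + (cmod (snd (\<Phi>' j x)))\<^sup>2)"
  have le: "I' j \<le> K * I j" if j: "j \<in> edges G" for j
  proof -
    have "I' j \<le> (LINT x:edge_int G j|lborel. K * ((cmod (fst (\<Phi> j x)))\<^sup>2 + (cmod (snd (\<Phi> j x)))\<^sup>2))"
      unfolding I'_def
      by (rule set_integral_mono[OF L2H_sq_int[OF assms(2) j] set_integrable_mult_right[OF L2H_sq_int[OF assms(1) j]] assms(4)[OF j]])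
    also have "\<dots> = K * I j" unfolding I_def by (rule set_integral_mult_right)
    finally show ?thesis .
  qed
  have "sum I' (edges G) \<le> sum (\<lambda>j. K * I j) (edges G)" by (rule sum_mono[OF le])
  also have "\<dots> = K * sum I (edges G)" by (simp add: sum_distrib_left)
  finally have "sqrt (sum I' (edges G)) \<le> sqrt (K * sum I (edges G))" by (rule real_sqrt_le_mono)
  then show ?thesis unfolding normH_def I_def[symmetric] I'_def[symmetric] by (simp add: real_sqrt_mult)
qed

lemma edge_open: "open (edge_int G j)"
  by (simp add: edge_int_def)

lemma LINT_nonneg: "(\<And>x. x \<in> A \<Longrightarrow> 0 \<le> f x) \<Longrightarrow> 0 \<le> (LINT x:A|M. (f x::real))"
  unfolding set_lebesgue_integral_def
  by (rule Bochner_Integration.integral_nonneg) (auto simp: indicator_def)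

lemma normH_zero_imp: assumes "H1 G \<Phi>" "normH G \<Phi> \<le> 0" "finite (edges G)" "j \<in> edges G"
  "x \<in> closure (edge_int G j)" shows "\<Phi> j x = (0,0)"
proof -
  define F where "F = (\<lambda>k x. (cmod (fst (\<Phi> k x)))\<^sup>2 + (cmod (snd (\<Phi> k x)))\<^sup>2)"
  define I where "I = (\<lambda>k. LINT x:edge_int G k|lborel. F k x)"
  have Inn: "\<And>k. 0 \<le> I k" unfolding I_def F_def by (rule LINT_nonneg) simp
  have "sqrt (sum I (edges G)) \<le> 0" using assms(2) unfolding normH_def I_def F_def .
  then have "sum I (edges G) \<le> 0" by simp
  moreover have "I j \<le> sum I (edges G)" by (rule member_le_sum[OF assms(4) _ assms(3)]) (rule Inn)
  ultimately have Ij: "I j \<le> 0" by linarith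
  have c1: "continuous_on (closure (edge_int G j)) (\<lambda>x. fst (\<Phi> j x))"
    and c2: "continuous_on (closure (edge_int G j)) (\<lambda>x. snd (\<Phi> j x))"
    using assms(1,4) unfolding H1_def H1_on_def by blast+
  have cF: "continuous_on (closure (edge_int G j)) (F j)"
    unfolding F_def by (intro continuous_on_add continuous_on_power continuous_on_norm c1 c2)
  have "F j x = 0"
  proof (rule zero_from_integral[OF edge_open cF _ _ _ assms(5)])
    show "\<And>x. 0 \<le> F j x" unfolding F_def by simp
    show "set_integrable lborel (edge_int G j) (F j)"
      unfolding F_def by (rule L2H_sq_int[OF H1_L2H[OF assms(1)] assms(4)])
    show "(LINT x:edge_int G j|lborel. F j x) \<le> 0" using Ij unfolding I_def .
  qed
  then show ?thesis unfolding F_def by (simp add: add_nonneg_eq_0_iff prod_eq_iff)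
qed



lemma W_C1: assumes d: "\<And>x. (g has_vector_derivative h x) (at x)" and ch: "continuous_on UNIV h"
  and "L2_on S g" "L2_on S h" shows "W S g h"
proof -
  have "continuous_on UNIV g"
    by (rule continuous_at_imp_continuous_on) (use d has_vector_derivative_continuous in blast)
  then have cg: "continuous_on (closure S) g" by (rule continuous_on_subset) simp
  have "weak_deriv_on S g h" unfolding weak_deriv_on_def
  proof (intro ballI impI conjI)
    fix x y :: real assume xy: "x \<in> S" "y \<in> S" "x \<le> y"
    have c: "continuous_on {x..y} h" by (rule continuous_on_subset[OF ch]) simp
    show i: "set_integrable lborel {x..y} h" by (rule borel_integrable_atLeastAtMost'[OF c])
    have "(h has_integral (g y - g x)) {x..y}"
      by (rule fundamental_theorem_of_calculus[OF xy(3)]) (rule has_vector_derivative_at_within[OF d])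
    then have "integral {x..y} h = g y - g x" by (rule integral_unique)
    then show "g y - g x = (LINT t:{x..y}|lborel. h t)"
      using set_borel_integral_eq_integral(2)[OF i] by simp
  qed
  then show ?thesis using cg assms(3,4) unfolding W_def by blast
qed

lemma L2_of_int: assumes "set_integrable lborel S f" "set_integrable lborel S (\<lambda>x. (cmod (f x))\<^sup>2)"
  shows "L2_on S f"
  unfolding L2_on_def set_borel_measurable_def
  using assms(2) borel_measurable_integrable[OF assms(1)[unfolded set_integrable_def]] by blast

lemma L2_cont_bounded: assumes "continuous_on UNIV f" shows "L2_on {a<..<b} f"
proof (rule L2_of_int)
  have c1: "continuous_on {a..b} f" by (rule continuous_on_subset[OF assms]) simp
  have c2: "continuous_on {a..b} (\<lambda>x. (cmod (f x))\<^sup>2)"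
    by (intro continuous_on_power continuous_on_norm c1)
  show "set_integrable lborel {a<..<b} f"
    by (rule set_integrable_subset[OF borel_integrable_atLeastAtMost'[OF c1]]) auto
  show "set_integrable lborel {a<..<b} (\<lambda>x. (cmod (f x))\<^sup>2)"
    by (rule set_integrable_subset[OF borel_integrable_atLeastAtMost'[OF c2]]) auto
qed

lemma exp_base_int: "integrable lborel (\<lambda>t::real. indicator {0..} t *\<^sub>R exp (- t))"
proof -
  have "(\<lambda>t::real. exp (- 1 * t)) integrable_on {0..}"
    by (rule integrable_on_exp_minus_to_infinity) simp
  then have "(\<lambda>t::real. exp (- t)) integrable_on {0..}" by simp
  then have "(\<lambda>t::real. exp (- t)) absolutely_integrable_on {0..}"
    by (rule nonnegative_absolutely_integrable_1) simp
  then have "integrable lebesgue (\<lambda>t::real. indicator {0..} t *\<^sub>R exp (- t))"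
    unfolding set_integrable_def .
  moreover have "(\<lambda>t::real. indicator {0..} t *\<^sub>R exp (- t)) \<in> borel_measurable lborel"
    by measurable
  ultimately show ?thesis using integrable_completion by blast
qed


lemma exp_half_int: assumes k: "k > 0" and s: "s = 1 \<or> s = -1"
  shows "set_integrable lborel (if s = -1 then {p<..} else {..<p}) (\<lambda>x::real. exp (s * k * (x - p)))"
proof -
  define T where "T = {x::real. 0 \<le> s * k * (p - x)}"
  have c0: "- s * k \<noteq> 0" using k s by auto
  have "integrable lborel (\<lambda>x. indicator {0..} (s * k * p + (- s * k) * x) *\<^sub>R exp (- (s * k * p + (- s * k) * x)))"
    using lborel_integrable_real_affine[OF exp_base_int c0, of "s * k * p"] by simp
  moreover have "(\<lambda>x. indicator {0..} (s * k * p + (- s * k) * x) *\<^sub>R exp (- (s * k * p + (- s * k) * x)))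
     = (\<lambda>x. indicator T x *\<^sub>R exp (s * k * (x - p)))"
    by (auto simp: T_def indicator_def fun_eq_iff algebra_simps)
  ultimately have iT: "set_integrable lborel T (\<lambda>x::real. exp (s * k * (x - p)))"
    unfolding set_integrable_def by simp
  show ?thesis
  proof (rule set_integrable_subset[OF iT])
    show "(if s = -1 then {p<..} else {..<p}) \<in> sets lborel" by simp
    show "(if s = -1 then {p<..} else {..<p}) \<subseteq> T"
      using s k by (auto simp: T_def mult_nonneg_nonneg mult_nonneg_nonpos)
  qed
qed

lemma L2_exp_half: assumes k: "k > 0" and s: "s = 1 \<or> s = -1"
  shows "L2_on (if s = -1 then {p<..} else {..<p}) (\<lambda>x. c * complex_of_real (exp (s * k * (x - p))))"
proof (rule L2_of_int)
  let ?S = "if s = -1 then {p<..} else {..<p}"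
  have of: "set_integrable lborel ?S (\<lambda>x. complex_of_real (exp (s * k * (x - p))))"
  proof -
    have "integrable lborel (\<lambda>x. complex_of_real (indicator ?S x *\<^sub>R exp (s * k * (x - p))))"
      using exp_half_int[OF k s, of p] unfolding set_integrable_def
      by (rule integrable_bounded_linear[OF bounded_linear_of_real])
    moreover have "(\<lambda>x. complex_of_real (indicator ?S x *\<^sub>R exp (s * k * (x - p)))) =
       (\<lambda>x. indicator ?S x *\<^sub>R complex_of_real (exp (s * k * (x - p))))"
      by (simp add: fun_eq_iff indicator_def)
    ultimately show ?thesis unfolding set_integrable_def by simp
  qed
  show "set_integrable lborel ?S (\<lambda>x. c * complex_of_real (exp (s * k * (x - p))))"
    by (rule set_integrable_mult_right[OF of])
  have k2: "2 * k > 0" using k by simp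
  have "set_integrable lborel ?S (\<lambda>x. (cmod c)\<^sup>2 * exp (s * (2 * k) * (x - p)))"
    by (rule set_integrable_mult_right[OF exp_half_int[OF k2 s]])
  moreover have "(\<lambda>x. (cmod c)\<^sup>2 * exp (s * (2 * k) * (x - p))) = (\<lambda>x. (cmod (c * complex_of_real (exp (s * k * (x - p)))))\<^sup>2)"
  proof
    fix x
    have "exp (s * (2 * k) * (x - p)) = (exp (s * k * (x - p)))\<^sup>2"
      by (simp add: power2_eq_square exp_add[symmetric] algebra_simps)
    then show "(cmod c)\<^sup>2 * exp (s * (2 * k) * (x - p)) = (cmod (c * complex_of_real (exp (s * k * (x - p)))))\<^sup>2"
      by (simp add: norm_mult power_mult_distrib)
  qed
  ultimately show "set_integrable lborel ?S (\<lambda>x. (cmod (c * complex_of_real (exp (s * k * (x - p)))))\<^sup>2)"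
    by simp
qed


lemma exp_vderiv: "((\<lambda>x. c * complex_of_real (exp (a * (x - p)))) has_vector_derivative
     (c * complex_of_real a * complex_of_real (exp (a * (x - p))))) (at x)"
proof -
  have "((\<lambda>x. exp (a * (x - p))) has_real_derivative (exp (a * (x - p)) * (a * (1 - 0)))) (at x)"
    by (intro DERIV_fun_exp DERIV_cmult DERIV_diff DERIV_ident DERIV_const)
  then have "((\<lambda>x. complex_of_real (exp (a * (x - p)))) has_vector_derivative
       complex_of_real (exp (a * (x - p)) * (a * (1 - 0)))) (at x)"
    by (rule has_vector_derivative_of_real)
  from has_vector_derivative_mult_right[OF this, of c] show ?thesis
    by (simp add: algebra_simps)
qed

lemma W_exp_edge: assumes G: "valid_graph G" and j: "j \<in> eedges G" and k: "k > 0"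
  shows "W (edge_int G j) (\<lambda>x. c * complex_of_real (exp (orient G j * k * (x - bdpt G j))))
     (\<lambda>x. (c * complex_of_real (orient G j * k)) * complex_of_real (exp (orient G j * k * (x - bdpt G j))))"
proof -
  let ?s = "orient G j"
  have s: "?s = 1 \<or> ?s = -1" using G j by (auto simp: valid_graph_def)
  have ni: "j \<notin> iedges G" using G j by (auto simp: valid_graph_def)
  have S: "edge_int G j = (if ?s = -1 then {bdpt G j<..} else {..<bdpt G j})"
    using ni by (simp add: edge_int_def bdpt_def)
  show ?thesis
  proof (rule W_C1)
    fix x show "((\<lambda>x. c * complex_of_real (exp (?s * k * (x - bdpt G j)))) has_vector_derivative
       (c * complex_of_real (?s * k)) * complex_of_real (exp (?s * k * (x - bdpt G j)))) (at x)"
      by (rule exp_vderiv)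
  next
    show "continuous_on UNIV (\<lambda>x. c * complex_of_real (?s * k) * complex_of_real (exp (?s * k * (x - bdpt G j))))"
      by (intro continuous_intros)
  next
    show "L2_on (edge_int G j) (\<lambda>x. c * complex_of_real (exp (?s * k * (x - bdpt G j))))"
      unfolding S by (rule L2_exp_half[OF k s])
    show "L2_on (edge_int G j) (\<lambda>x. c * complex_of_real (?s * k) * complex_of_real (exp (?s * k * (x - bdpt G j))))"
      unfolding S by (rule L2_exp_half[OF k s])
  qed
qed

lemma W_affine_int: assumes "a < b"
  shows "W {a<..<b} (\<lambda>x. \<alpha> + \<beta> * complex_of_real x) (\<lambda>x. \<beta>)"
proof (rule W_C1)
  fix x
  have "((\<lambda>x. complex_of_real x) has_vector_derivative complex_of_real 1) (at x)"
    by (rule has_vector_derivative_of_real) (rule DERIV_ident)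
  from has_vector_derivative_add[OF has_vector_derivative_const has_vector_derivative_mult_right[OF this, of \<beta>], of \<alpha>]
  show "((\<lambda>x. \<alpha> + \<beta> * complex_of_real x) has_vector_derivative \<beta>) (at x)" by simp
next
  show "continuous_on UNIV (\<lambda>x. \<beta>)" by (rule continuous_on_const)
  show "L2_on {a<..<b} (\<lambda>x. \<alpha> + \<beta> * complex_of_real x)"
    by (rule L2_cont_bounded) (intro continuous_intros)
  show "L2_on {a<..<b} (\<lambda>x. \<beta>)"
    by (rule L2_cont_bounded) (rule continuous_on_const)
qed

lemma Dmax_from_W: assumes "\<And>j. j \<in> edges G \<Longrightarrow> W (edge_int G j) (\<lambda>x. fst (\<Phi> j x)) (h1 j)"
  "\<And>j. j \<in> edges G \<Longrightarrow> W (edge_int G j) (\<lambda>x. snd (\<Phi> j x)) (h2 j)"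
  shows "Dmax_rel G m \<Phi> (\<lambda>j x. (- \<i> * h2 j x + complex_of_real m * fst (\<Phi> j x),
                                  - \<i> * h1 j x - complex_of_real m * snd (\<Phi> j x)))"
  unfolding Dmax_rel_iff
proof (intro conjI ballI)
  show "L2H G (\<lambda>j x. (- \<i> * h2 j x + complex_of_real m * fst (\<Phi> j x),
                                  - \<i> * h1 j x - complex_of_real m * snd (\<Phi> j x)))"
    unfolding L2H_def fst_conv snd_conv
  proof (intro conjI ballI)
    fix j assume j: "j \<in> edges G"
    have w1: "W (edge_int G j) (\<lambda>x. fst (\<Phi> j x)) (h1 j)" and w2: "W (edge_int G j) (\<lambda>x. snd (\<Phi> j x)) (h2 j)"
      using assms j by blast+
    show "L2_on (edge_int G j) (\<lambda>x. - \<i> * h2 j x + complex_of_real m * fst (\<Phi> j x))"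
      using w1 w2 unfolding W_def by (intro L2_lin) blast+
    have "L2_on (edge_int G j) (\<lambda>x. - \<i> * h1 j x + (- complex_of_real m) * snd (\<Phi> j x))"
      using w1 w2 unfolding W_def by (intro L2_lin) blast+
    then show "L2_on (edge_int G j) (\<lambda>x. - \<i> * h1 j x - complex_of_real m * snd (\<Phi> j x))"
      by simp
  qed
next
  fix j assume j: "j \<in> edges G"
  show "\<exists>k1 k2. W (edge_int G j) (\<lambda>x. fst (\<Phi> j x)) k1 \<and> W (edge_int G j) (\<lambda>x. snd (\<Phi> j x)) k2 \<and>
         (AE x in lborel. x \<in> edge_int G j \<longrightarrow>
             (- \<i> * h2 j x + complex_of_real m * fst (\<Phi> j x), - \<i> * h1 j x - complex_of_real m * snd (\<Phi> j x)) =
             (- \<i> * k2 x + complex_of_real m * fst (\<Phi> j x), - \<i> * k1 x - complex_of_real m * snd (\<Phi> j x)))"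
    using assms(1,2)[OF j] by blast
qed



section \<open>Boundary maps and charge conjugation\<close>

lemma orient_cases: "valid_graph G \<Longrightarrow> j \<in> eedges G \<Longrightarrow> orient G j = -1 \<or> orient G j = 1"
  by (auto simp: valid_graph_def)

lemma orient_sq: "valid_graph G \<Longrightarrow> j \<in> eedges G \<Longrightarrow>
   complex_of_real (orient G j) * complex_of_real (orient G j) = 1"
proof -
  assume a: "valid_graph G" "j \<in> eedges G"
  have r: "orient G j * orient G j = 1" using orient_cases[OF a] by auto
  then show ?thesis by (metis of_real_1 of_real_mult)
qed

lemma Gamma2_C: "Gamma2 G (chargeC \<Phi>) = VC G (Gamma1 G \<Phi>)"
  by (auto simp: Gamma1_def Gamma2_def VC_def chargeC_def fun_eq_iff)

lemma Gamma1_C: assumes "valid_graph G" shows "Gamma1 G (chargeC \<Phi>) = VC G (Gamma2 G \<Phi>)"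
proof
  fix j
  have "j \<in> eedges G \<Longrightarrow> complex_of_real (orient G j) * complex_of_real (orient G j) = 1"
    using orient_sq[OF assms] by blast
  then show "Gamma1 G (chargeC \<Phi>) j = VC G (Gamma2 G \<Phi>) j"
    by (auto simp: Gamma1_def Gamma2_def VC_def chargeC_def algebra_simps)
qed

lemma Gamma1_bspace: "valid_graph G \<Longrightarrow> Gamma1 G \<Phi> \<in> bspace G"
  by (auto simp: Gamma1_def bspace_def edges_def valid_graph_def)

lemma Gamma2_bspace: "valid_graph G \<Longrightarrow> Gamma2 G \<Phi> \<in> bspace G"
  by (auto simp: Gamma2_def bspace_def edges_def valid_graph_def)

lemma VC_bspace: "valid_graph G \<Longrightarrow> VC G \<omega> \<in> bspace G"
  by (auto simp: VC_def bspace_def edges_def valid_graph_def)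

lemma VC_VC: assumes "valid_graph G" "\<omega> \<in> bspace G" shows "VC G (VC G \<omega>) = \<omega>"
proof
  fix j
  have "j \<in> eedges G \<Longrightarrow> complex_of_real (orient G j) * complex_of_real (orient G j) = 1"
    using orient_sq[OF assms(1)] by blast
  moreover have "j \<notin> edges G \<Longrightarrow> \<omega> j = (0,0)" "j \<in> eedges G \<Longrightarrow> snd (\<omega> j) = 0"
    using assms(2) by (auto simp: bspace_def)
  ultimately show "VC G (VC G \<omega>) j = \<omega> j"
    by (cases "\<omega> j") (auto simp: VC_def edges_def algebra_simps)
qed

lemma VC_zero: "VC G (\<lambda>j. (0,0)) = (\<lambda>j. (0,0))"
  by (auto simp: VC_def fun_eq_iff)

lemma Gamma1_diff: "Gamma1 G (\<lambda>j x. \<Phi> j x - \<Phi>' j x) = (\<lambda>j. Gamma1 G \<Phi> j - Gamma1 G \<Phi>' j)"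
  by (auto simp: Gamma1_def fun_eq_iff zero_prod_def)

lemma Gamma2_diff: "Gamma2 G (\<lambda>j x. \<Phi> j x - \<Phi>' j x) = (\<lambda>j. Gamma2 G \<Phi> j - Gamma2 G \<Phi>' j)"
  by (auto simp: Gamma2_def fun_eq_iff algebra_simps zero_prod_def)

lemma normH_zero_imp': "valid_graph G \<Longrightarrow> H1 G \<Phi> \<Longrightarrow> normH G \<Phi> \<le> 0 \<Longrightarrow> j \<in> edges G \<Longrightarrow>
  x \<in> closure (edge_int G j) \<Longrightarrow> \<Phi> j x = (0,0)"
  by (rule normH_zero_imp) (auto simp: valid_graph_def edges_def)

lemma Dmax_L2H: "Dmax_rel G m \<Phi> \<Psi> \<Longrightarrow> L2H G \<Phi> \<and> L2H G \<Psi>"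
  by (auto simp: Dmax_rel_def H1_L2H)

lemma Dmax_cong: "Dmax_rel G m \<Phi> \<Psi> \<Longrightarrow> \<Phi> = \<Phi>' \<Longrightarrow> \<Psi> = \<Psi>' \<Longrightarrow> Dmax_rel G m \<Phi>' \<Psi>'"
  by simp

lemma Dmax_C: assumes "Dmax_rel G m \<Phi> \<Psi>"
  shows "Dmax_rel G m (chargeC \<Phi>) (\<lambda>j x. - chargeC \<Psi> j x)"
  using Dmax_lin[OF Dmax_cnj[OF assms], of 0 1 1 0]
  by (rule Dmax_cong) (auto simp: fun_eq_iff chargeC_def algebra_simps)

lemma Dmax_diff: assumes "Dmax_rel G m \<Phi> \<Psi>" "Dmax_rel G m \<Phi>' \<Psi>'"
  shows "Dmax_rel G m (\<lambda>j x. \<Phi> j x - \<Phi>' j x) (\<lambda>j x. \<Psi> j x - \<Psi>' j x)"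
proof -
  have "Dmax_rel G m (\<lambda>j x. - \<Phi>' j x) (\<lambda>j x. - \<Psi>' j x)"
    using Dmax_lin[OF assms(2), of "-1" 0 0 "-1"] by (rule Dmax_cong) (auto simp: fun_eq_iff algebra_simps prod_eq_iff)
  from Dmax_add[OF assms(1) this] show ?thesis by simp
qed

lemma normH_nonneg: "normH G \<Phi> \<ge> 0"
  unfolding normH_def by (intro real_sqrt_ge_zero sum_nonneg LINT_nonneg) auto

lemma normH_zero_fun: "normH G (\<lambda>j x. (0,0)) = 0"
  by (simp add: normH_def)

lemma normH_eq: assumes
  "\<And>j x. j \<in> edges G \<Longrightarrow> x \<in> edge_int G j \<Longrightarrow>
     (cmod (fst (\<Phi>' j x)))\<^sup>2 + (cmod (snd (\<Phi>' j x)))\<^sup>2 = (cmod (fst (\<Phi> j x)))\<^sup>2 + (cmod (snd (\<Phi> j x)))\<^sup>2"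
  shows "normH G \<Phi>' = normH G \<Phi>"
  unfolding normH_def
  by (intro arg_cong[where f=sqrt] sum.cong refl set_lebesgue_integral_cong) (auto simp: assms edge_int_def)

section \<open>Resolvent\<close>

lemma res_bound: assumes "z \<in> resolvent_D0 G m"
  shows "\<exists>c\<ge>0. \<forall>\<Phi> \<Psi>. L2H G \<Psi> \<and> D0_rel G m \<Phi> (\<lambda>j x. \<Psi> j x + psc z (\<Phi> j x))
                 \<longrightarrow> normH G \<Phi> \<le> c * normH G \<Psi>"
proof -
  obtain c where c: "\<forall>\<Phi> \<Psi>. L2H G \<Psi> \<and> D0_rel G m \<Phi> (\<lambda>j x. \<Psi> j x + psc z (\<Phi> j x))
                 \<longrightarrow> normH G \<Phi> \<le> c * normH G \<Psi>"
    using assms by (auto simp: resolvent_D0_def)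
  have "c * normH G \<Psi> \<le> max c 0 * normH G \<Psi>" for \<Psi>
    by (intro mult_right_mono normH_nonneg) auto
  then show ?thesis using c by (intro exI[of _ "max c 0"]) (auto intro: order_trans)
qed

lemma L2H_zero: "L2H G (\<lambda>j x. (0,0))"
  by (simp add: L2H_def L2_zero)

lemma res_inj: assumes "valid_graph G" "z \<in> resolvent_D0 G m"
  "Dmax_rel G m \<Phi> (\<lambda>j x. psc z (\<Phi> j x))" "Gamma1 G \<Phi> = (\<lambda>j. (0,0))"
  shows "Gamma2 G \<Phi> = (\<lambda>j. (0,0))"
proof -
  obtain c where c: "\<forall>\<Phi> \<Psi>. L2H G \<Psi> \<and> D0_rel G m \<Phi> (\<lambda>j x. \<Psi> j x + psc z (\<Phi> j x))
                 \<longrightarrow> normH G \<Phi> \<le> c * normH G \<Psi>"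
    using res_bound[OF assms(2)] by blast
  have "D0_rel G m \<Phi> (\<lambda>j x. (0,0) + psc z (\<Phi> j x))"
    using assms(3,4) by (simp add: D0_rel_def zero_prod_def[symmetric])
  then have "normH G \<Phi> \<le> c * normH G (\<lambda>j x. (0,0))" using c[rule_format, of "\<lambda>j x. (0,0)" \<Phi>] L2H_zero[of G] by simp
  then have "normH G \<Phi> \<le> 0" by (simp add: normH_zero_fun)
  moreover have "H1 G \<Phi>" using assms(3) by (simp add: Dmax_rel_def)
  ultimately have z: "\<And>j x. j \<in> edges G \<Longrightarrow> x \<in> closure (edge_int G j) \<Longrightarrow> \<Phi> j x = (0,0)"
    using normH_zero_imp'[OF assms(1)] by blast
  show ?thesis
  proof
    fix j
    have cl: "j \<in> iedges G \<Longrightarrow> lft G j \<in> closure (edge_int G j) \<and> rgt G j \<in> closure (edge_int G j)"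
      using assms(1) by (auto simp: edge_int_def valid_graph_def)
    have ce: "j \<in> eedges G \<Longrightarrow> bdpt G j \<in> closure (edge_int G j)"
      using assms(1) by (auto simp: edge_int_def valid_graph_def bdpt_def)
    show "Gamma2 G \<Phi> j = (0, 0)"
      using z[of j] cl ce by (auto simp: Gamma2_def edges_def)
  qed
qed

lemma boundary_fun: assumes G: "valid_graph G" and o: "\<omega> \<in> bspace G"
  shows "\<exists>\<Phi> \<Psi>. Dmax_rel G m \<Phi> \<Psi> \<and> Gamma1 G \<Phi> = \<omega>"
proof -
  define \<beta> where "\<beta> j = (snd (\<omega> j) - fst (\<omega> j)) / complex_of_real (rgt G j - lft G j)" for j
  define \<alpha> where "\<alpha> j = fst (\<omega> j) - \<beta> j * complex_of_real (lft G j)" for j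
  define f1 where "f1 j x = (if j \<in> iedges G then \<alpha> j + \<beta> j * complex_of_real x
      else if j \<in> eedges G then fst (\<omega> j) * complex_of_real (exp (orient G j * 1 * (x - bdpt G j))) else 0)" for j x
  define h1 where "h1 j x = (if j \<in> iedges G then \<beta> j
      else if j \<in> eedges G then (fst (\<omega> j) * complex_of_real (orient G j * 1)) * complex_of_real (exp (orient G j * 1 * (x - bdpt G j))) else 0)" for j x
  define \<Phi> where "\<Phi> j x = (f1 j x, 0::complex)" for j x
  have W1: "W (edge_int G j) (\<lambda>x. fst (\<Phi> j x)) (h1 j)" if j: "j \<in> edges G" for j
  proof (cases "j \<in> iedges G")
    case True
    have lr: "lft G j < rgt G j" using G True by (auto simp: valid_graph_def)
    have "W {lft G j<..<rgt G j} (\<lambda>x. \<alpha> j + \<beta> j * complex_of_real x) (\<lambda>x. \<beta> j)"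
      by (rule W_affine_int[OF lr])
    moreover have "(\<lambda>x. fst (\<Phi> j x)) = (\<lambda>x. \<alpha> j + \<beta> j * complex_of_real x)" "h1 j = (\<lambda>x. \<beta> j)"
      using True by (auto simp: \<Phi>_def f1_def h1_def fun_eq_iff)
    ultimately show ?thesis using True by (simp add: edge_int_def)
  next
    case False
    then have e: "j \<in> eedges G" using j by (simp add: edges_def)
    have "W (edge_int G j) (\<lambda>x. fst (\<omega> j) * complex_of_real (exp (orient G j * 1 * (x - bdpt G j))))
     (\<lambda>x. (fst (\<omega> j) * complex_of_real (orient G j * 1)) * complex_of_real (exp (orient G j * 1 * (x - bdpt G j))))"
      by (rule W_exp_edge[OF G e]) simp
    moreover have "(\<lambda>x. fst (\<Phi> j x)) = (\<lambda>x. fst (\<omega> j) * complex_of_real (exp (orient G j * 1 * (x - bdpt G j))))"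
      "h1 j = (\<lambda>x. (fst (\<omega> j) * complex_of_real (orient G j * 1)) * complex_of_real (exp (orient G j * 1 * (x - bdpt G j))))"
      using False e by (auto simp: \<Phi>_def f1_def h1_def fun_eq_iff)
    ultimately show ?thesis by simp
  qed
  have W2: "W (edge_int G j) (\<lambda>x. snd (\<Phi> j x)) ((\<lambda>j x. 0) j)" for j
    by (simp add: \<Phi>_def W_zero)
  have D: "\<exists>\<Psi>. Dmax_rel G m \<Phi> \<Psi>"
    using Dmax_from_W[of G \<Phi> h1 "\<lambda>j x. 0"] W1 W2 by blast
  have "Gamma1 G \<Phi> = \<omega>"
  proof
    fix j
    show "Gamma1 G \<Phi> j = \<omega> j"
    proof (cases "j \<in> iedges G")
      case True
      have lr: "complex_of_real (rgt G j - lft G j) \<noteq> 0" using G True by (auto simp: valid_graph_def)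
      have "\<alpha> j + \<beta> j * complex_of_real (lft G j) = fst (\<omega> j)" by (simp add: \<alpha>_def)
      moreover have "\<alpha> j + \<beta> j * complex_of_real (rgt G j) = snd (\<omega> j)"
      proof -
        have "\<alpha> j + \<beta> j * complex_of_real (rgt G j) = fst (\<omega> j) + \<beta> j * complex_of_real (rgt G j - lft G j)"
          by (simp add: \<alpha>_def algebra_simps)
        also have "\<dots> = snd (\<omega> j)" using lr by (simp add: \<beta>_def)
        finally show ?thesis .
      qed
      ultimately show ?thesis using True by (simp add: Gamma1_def \<Phi>_def f1_def prod_eq_iff)
    next
      case False
      show ?thesis
      proof (cases "j \<in> eedges G")
        case True
        have "snd (\<omega> j) = 0" using o True by (simp add: bspace_def)
        then show ?thesis using False True by (simp add: Gamma1_def \<Phi>_def f1_def prod_eq_iff)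
      next
        case False2: False
        have "\<omega> j = (0,0)" using o False False2 by (simp add: bspace_def edges_def)
        then show ?thesis using False False2 by (simp add: Gamma1_def)
      qed
    qed
  qed
  then show ?thesis using D by blast
qed

lemma res_exist: assumes G: "valid_graph G" and z: "z \<in> resolvent_D0 G m" and o: "\<omega> \<in> bspace G"
  shows "\<exists>\<Phi>. Dmax_rel G m \<Phi> (\<lambda>j x. psc z (\<Phi> j x)) \<and> Gamma1 G \<Phi> = \<omega>"
proof -
  obtain \<Phi>0 \<Psi>0 where D0: "Dmax_rel G m \<Phi>0 \<Psi>0" and g0: "Gamma1 G \<Phi>0 = \<omega>"
    using boundary_fun[OF G o] by blast
  define \<Xi> where "\<Xi> j x = \<Psi>0 j x - psc z (\<Phi>0 j x)" for j x
  have L: "L2H G \<Phi>0" "L2H G \<Psi>0" using Dmax_L2H[OF D0] by blast+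
  have LX: "L2H G \<Xi>"
    using L2H_lin[OF L, of "- z" 0 1 0 0 "- z" 0 1]
    by (rule L2H_cong) (simp add: fun_eq_iff \<Xi>_def psc_def prod_eq_iff)
  obtain \<Phi>1 where D1: "D0_rel G m \<Phi>1 (\<lambda>j x. \<Xi> j x + psc z (\<Phi>1 j x))"
    using z LX unfolding resolvent_D0_def by blast
  have "Dmax_rel G m (\<lambda>j x. \<Phi>0 j x - \<Phi>1 j x) (\<lambda>j x. \<Psi>0 j x - (\<Xi> j x + psc z (\<Phi>1 j x)))"
    using Dmax_diff[OF D0] D1 unfolding D0_rel_def by blast
  then have "Dmax_rel G m (\<lambda>j x. \<Phi>0 j x - \<Phi>1 j x) (\<lambda>j x. psc z (\<Phi>0 j x - \<Phi>1 j x))"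
    by (rule Dmax_cong) (auto simp: fun_eq_iff \<Xi>_def psc_def prod_eq_iff algebra_simps)
  moreover have "Gamma1 G (\<lambda>j x. \<Phi>0 j x - \<Phi>1 j x) = \<omega>"
    using g0 D1 unfolding D0_rel_def by (simp add: Gamma1_diff fun_eq_iff prod_eq_iff)
  ultimately show ?thesis by blast
qed

lemma G1T: assumes G: "valid_graph G" and g: "Gamma2 G Xc = (\<lambda>j. (0,0))"
  shows "Gamma1 G (\<lambda>j x. (snd (Xc j x), f j x)) = (\<lambda>j. (0,0))"
proof
  fix j
  have gj: "Gamma2 G Xc j = (0,0)" using g by simp
  show "Gamma1 G (\<lambda>j x. (snd (Xc j x), f j x)) j = (0,0)"
  proof (cases "j \<in> iedges G")
    case True then show ?thesis using gj by (simp add: Gamma1_def Gamma2_def)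
  next
    case False
    show ?thesis
    proof (cases "j \<in> eedges G")
      case True
      have "complex_of_real (orient G j) \<noteq> 0" using orient_cases[OF G True] by auto
      then show ?thesis using gj False True by (simp add: Gamma1_def Gamma2_def)
    qed (use False in \<open>simp add: Gamma1_def\<close>)
  qed
qed

lemma G2T: assumes g: "Gamma1 G \<Phi> = (\<lambda>j. (0,0))"
  shows "Gamma2 G (\<lambda>j x. (f j x, fst (\<Phi> j x))) = (\<lambda>j. (0,0))"
proof
  fix j
  have gj: "Gamma1 G \<Phi> j = (0,0)" using g by simp
  show "Gamma2 G (\<lambda>j x. (f j x, fst (\<Phi> j x))) j = (0,0)"
    using gj by (auto simp: Gamma1_def Gamma2_def split: if_splits)
qed

lemma normH_C: "normH G (chargeC \<Phi>) = normH G \<Phi>"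
  by (rule normH_eq) (simp add: chargeC_def)

lemma normH_negC: "normH G (\<lambda>j x. - chargeC \<Phi> j x) = normH G \<Phi>"
  by (rule normH_eq) (simp add: chargeC_def)

lemma pt_bound1: "(cmod a)\<^sup>2 + (cmod (\<beta> * b))\<^sup>2 \<le> max 1 ((cmod \<beta>)\<^sup>2) * ((cmod b)\<^sup>2 + (cmod a)\<^sup>2)"
proof -
  have "(cmod a)\<^sup>2 \<le> max 1 ((cmod \<beta>)\<^sup>2) * (cmod a)\<^sup>2" by (simp add: mult_le_cancel_right1)
  moreover have "(cmod (\<beta> * b))\<^sup>2 \<le> max 1 ((cmod \<beta>)\<^sup>2) * (cmod b)\<^sup>2"
    by (simp add: norm_mult power_mult_distrib mult_right_mono)
  ultimately show ?thesis by (simp add: algebra_simps)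
qed

lemma Dmax_T: assumes D: "Dmax_rel G m X (\<lambda>j x. P j x + psc w (X j x))"
  and hb: "\<beta> * (w + complex_of_real m) = w - complex_of_real m"
  shows "Dmax_rel G m (\<lambda>j x. (snd (X j x), \<beta> * fst (X j x)))
     (\<lambda>j x. (\<beta> * snd (P j x), fst (P j x)) + psc w (snd (X j x), \<beta> * fst (X j x)))"
  using Dmax_lin[OF D, of 0 1 \<beta> 0]
proof (rule Dmax_cong)
  let ?M = "complex_of_real m"
  show "(\<lambda>j x. (0 * fst (X j x) + 1 * snd (X j x), \<beta> * fst (X j x) + 0 * snd (X j x))) =
        (\<lambda>j x. (snd (X j x), \<beta> * fst (X j x)))" by simp
  show "(\<lambda>j x. (\<beta> * (snd (P j x + psc w (X j x)) + ?M * snd (X j x)) +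
                  0 * (fst (P j x + psc w (X j x)) - ?M * fst (X j x)) + ?M * (0 * fst (X j x) + 1 * snd (X j x)),
                  0 * (snd (P j x + psc w (X j x)) + ?M * snd (X j x)) +
                  1 * (fst (P j x + psc w (X j x)) - ?M * fst (X j x)) - ?M * (\<beta> * fst (X j x) + 0 * snd (X j x))))
      = (\<lambda>j x. (\<beta> * snd (P j x), fst (P j x)) + psc w (snd (X j x), \<beta> * fst (X j x)))"
  proof (intro ext)
    fix j x
    have e1: "\<beta> * (snd (P j x) + w * snd (X j x) + ?M * snd (X j x)) + ?M * snd (X j x) = \<beta> * snd (P j x) + w * snd (X j x)"
      using hb by algebra
    have e2: "fst (P j x) + w * fst (X j x) - ?M * fst (X j x) - ?M * (\<beta> * fst (X j x)) = fst (P j x) + w * (\<beta> * fst (X j x))"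
      using hb by algebra
    show "(\<beta> * (snd (P j x + psc w (X j x)) + ?M * snd (X j x)) +
                  0 * (fst (P j x + psc w (X j x)) - ?M * fst (X j x)) + ?M * (0 * fst (X j x) + 1 * snd (X j x)),
                  0 * (snd (P j x + psc w (X j x)) + ?M * snd (X j x)) +
                  1 * (fst (P j x + psc w (X j x)) - ?M * fst (X j x)) - ?M * (\<beta> * fst (X j x) + 0 * snd (X j x)))
      = (\<beta> * snd (P j x), fst (P j x)) + psc w (snd (X j x), \<beta> * fst (X j x))"
      using e1 e2 by (simp add: psc_def)
  qed
qed

lemma Dmax_Tinv: assumes D: "Dmax_rel G m \<Phi> (\<lambda>j x. P j x + psc w (\<Phi> j x))"
  and hb: "\<beta> * (w + complex_of_real m) = w - complex_of_real m" and bb: "b' * \<beta> = 1"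
  shows "Dmax_rel G m (\<lambda>j x. (b' * snd (\<Phi> j x), fst (\<Phi> j x)))
     (\<lambda>j x. (snd (P j x), b' * fst (P j x)) + psc w (b' * snd (\<Phi> j x), fst (\<Phi> j x)))"
  using Dmax_lin[OF D, of 0 b' 1 0]
proof (rule Dmax_cong)
  let ?M = "complex_of_real m"
  show "(\<lambda>j x. (0 * fst (\<Phi> j x) + b' * snd (\<Phi> j x), 1 * fst (\<Phi> j x) + 0 * snd (\<Phi> j x))) =
        (\<lambda>j x. (b' * snd (\<Phi> j x), fst (\<Phi> j x)))" by simp
  show "(\<lambda>j x. (1 * (snd (P j x + psc w (\<Phi> j x)) + ?M * snd (\<Phi> j x)) +
                  0 * (fst (P j x + psc w (\<Phi> j x)) - ?M * fst (\<Phi> j x)) + ?M * (0 * fst (\<Phi> j x) + b' * snd (\<Phi> j x)),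
                  0 * (snd (P j x + psc w (\<Phi> j x)) + ?M * snd (\<Phi> j x)) +
                  b' * (fst (P j x + psc w (\<Phi> j x)) - ?M * fst (\<Phi> j x)) - ?M * (1 * fst (\<Phi> j x) + 0 * snd (\<Phi> j x))))
      = (\<lambda>j x. (snd (P j x), b' * fst (P j x)) + psc w (b' * snd (\<Phi> j x), fst (\<Phi> j x)))"
  proof (intro ext)
    fix j x
    have e1: "snd (P j x) + w * snd (\<Phi> j x) + ?M * snd (\<Phi> j x) + ?M * (b' * snd (\<Phi> j x)) = snd (P j x) + w * (b' * snd (\<Phi> j x))"
      using hb bb by algebra
    have e2: "b' * (fst (P j x) + w * fst (\<Phi> j x) - ?M * fst (\<Phi> j x)) - ?M * fst (\<Phi> j x) = b' * fst (P j x) + w * fst (\<Phi> j x)"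
      using hb bb by algebra
    show "(1 * (snd (P j x + psc w (\<Phi> j x)) + ?M * snd (\<Phi> j x)) +
                  0 * (fst (P j x + psc w (\<Phi> j x)) - ?M * fst (\<Phi> j x)) + ?M * (0 * fst (\<Phi> j x) + b' * snd (\<Phi> j x)),
                  0 * (snd (P j x + psc w (\<Phi> j x)) + ?M * snd (\<Phi> j x)) +
                  b' * (fst (P j x + psc w (\<Phi> j x)) - ?M * fst (\<Phi> j x)) - ?M * (1 * fst (\<Phi> j x) + 0 * snd (\<Phi> j x)))
      = (snd (P j x), b' * fst (P j x)) + psc w (b' * snd (\<Phi> j x), fst (\<Phi> j x))"
      using e1 e2 by (simp add: psc_def)
  qed
qed

lemma res_sym_main: assumes G: "valid_graph G" and z: "z \<in> resolvent_D0 G m"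
  and zm: "z \<noteq> complex_of_real m" and zm2: "z \<noteq> - complex_of_real m"
  shows "- cnj z \<in> resolvent_D0 G m"
proof -
  define M where "M = complex_of_real m"
  define w where "w = - cnj z"
  define \<beta> where "\<beta> = (w - M) / (w + M)"
  define b' where "b' = 1 / \<beta>"
  have wM: "w + M \<noteq> 0"
  proof
    assume "w + M = 0"
    then have "cnj (cnj z) = cnj M" by (simp add: w_def add_eq_0_iff)
    then show False using zm by (simp add: M_def)
  qed
  have b0: "\<beta> \<noteq> 0"
  proof
    assume "\<beta> = 0"
    then have "w = M" using wM by (simp add: \<beta>_def)
    then have "cnj z = - M" by (simp add: w_def minus_equation_iff)
    then have "cnj (cnj z) = cnj (- M)" by simp
    then show False using zm2 by (simp add: M_def)
  qed
  have hb: "\<beta> * (w + complex_of_real m) = w - complex_of_real m" using wM by (simp add: \<beta>_def M_def)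
  have bb: "b' * \<beta> = 1" using b0 by (simp add: b'_def)
  have bb2: "\<And>a. \<beta> * (b' * a) = a" using bb by (simp add: mult.assoc[symmetric] mult.commute[of \<beta>])
  have cw: "cnj w = - z" by (simp add: w_def)
  obtain c where c0: "c \<ge> 0" and c: "\<forall>\<Phi> \<Psi>. L2H G \<Psi> \<and> D0_rel G m \<Phi> (\<lambda>j x. \<Psi> j x + psc z (\<Phi> j x))
                 \<longrightarrow> normH G \<Phi> \<le> c * normH G \<Psi>"
    using res_bound[OF z] by blast
  have LXi: "L2H G (\<lambda>j x. - chargeC (\<lambda>j x. (snd (\<Psi> j x), b' * fst (\<Psi> j x))) j x)" if L: "L2H G \<Psi>" for \<Psi>
    using L2H_lin[OF L2H_cnj[OF L] L2H_cnj[OF L], of "- cnj b'" 0 0 0 0 "-1" 0 0]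
    by (rule L2H_cong) (simp add: fun_eq_iff chargeC_def)
  have ex: "\<exists>\<Phi>. D0_rel G m \<Phi> (\<lambda>j x. \<Psi> j x + psc w (\<Phi> j x))" if L: "L2H G \<Psi>" for \<Psi>
  proof -
    define \<Psi>' where "\<Psi>' j x = (snd (\<Psi> j x), b' * fst (\<Psi> j x))" for j x
    define \<Xi> where "\<Xi> j x = - chargeC \<Psi>' j x" for j x
    have LX: "L2H G \<Xi>" using LXi[OF L] unfolding \<Xi>_def \<Psi>'_def[abs_def] .
    obtain \<Phi>z where Dz: "Dmax_rel G m \<Phi>z (\<lambda>j x. \<Xi> j x + psc z (\<Phi>z j x))"
      and gz: "Gamma1 G \<Phi>z = (\<lambda>j. (0,0))"
      using z LX unfolding resolvent_D0_def D0_rel_def by blast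
    define Xc where "Xc = chargeC \<Phi>z"
    have Dc: "Dmax_rel G m Xc (\<lambda>j x. \<Psi>' j x + psc w (Xc j x))"
      using Dmax_C[OF Dz] unfolding Xc_def
      by (rule Dmax_cong) (simp_all add: fun_eq_iff \<Xi>_def \<Psi>'_def chargeC_def psc_def w_def)
    have g2: "Gamma2 G Xc = (\<lambda>j. (0,0))" unfolding Xc_def by (simp add: Gamma2_C gz VC_zero)
    define \<Phi> where "\<Phi> j x = (snd (Xc j x), \<beta> * fst (Xc j x))" for j x
    have "Dmax_rel G m \<Phi> (\<lambda>j x. \<Psi> j x + psc w (\<Phi> j x))"
      using Dmax_T[OF Dc hb] unfolding \<Phi>_def[abs_def]
      by (rule Dmax_cong) (simp_all add: fun_eq_iff \<Psi>'_def bb2)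
    moreover have "Gamma1 G \<Phi> = (\<lambda>j. (0,0))"
      unfolding \<Phi>_def[abs_def] by (rule G1T[OF G g2])
    ultimately show ?thesis unfolding D0_rel_def by blast
  qed
  define K where "K = sqrt (max 1 ((cmod \<beta>)\<^sup>2)) * c * sqrt (max 1 ((cmod b')\<^sup>2))"
  have bd: "normH G \<Phi> \<le> K * normH G \<Psi>"
    if L: "L2H G \<Psi>" and D0: "D0_rel G m \<Phi> (\<lambda>j x. \<Psi> j x + psc w (\<Phi> j x))" for \<Phi> \<Psi>
  proof -
    have D: "Dmax_rel G m \<Phi> (\<lambda>j x. \<Psi> j x + psc w (\<Phi> j x))" and g1: "Gamma1 G \<Phi> = (\<lambda>j. (0,0))"
      using D0 unfolding D0_rel_def by blast+
    define \<Psi>' where "\<Psi>' j x = (snd (\<Psi> j x), b' * fst (\<Psi> j x))" for j x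
    define \<Xi> where "\<Xi> j x = - chargeC \<Psi>' j x" for j x
    have LX: "L2H G \<Xi>" using LXi[OF L] unfolding \<Xi>_def \<Psi>'_def[abs_def] .
    define Xc where "Xc j x = (b' * snd (\<Phi> j x), fst (\<Phi> j x))" for j x
    have DX: "Dmax_rel G m Xc (\<lambda>j x. \<Psi>' j x + psc w (Xc j x))"
      using Dmax_Tinv[OF D hb bb] unfolding Xc_def[abs_def] \<Psi>'_def[abs_def] .
    have g2: "Gamma2 G Xc = (\<lambda>j. (0,0))" unfolding Xc_def[abs_def] by (rule G2T[OF g1])
    define \<Phi>z where "\<Phi>z = chargeC Xc"
    have Dz: "Dmax_rel G m \<Phi>z (\<lambda>j x. \<Xi> j x + psc z (\<Phi>z j x))"
      using Dmax_C[OF DX] unfolding \<Phi>z_def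
      by (rule Dmax_cong) (simp_all add: fun_eq_iff \<Xi>_def chargeC_def psc_def w_def)
    have gz: "Gamma1 G \<Phi>z = (\<lambda>j. (0,0))" unfolding \<Phi>z_def by (simp add: Gamma1_C[OF G] g2 VC_zero)
    have "normH G \<Phi>z \<le> c * normH G \<Xi>" using c LX Dz gz unfolding D0_rel_def by blast
    then have n1: "normH G Xc \<le> c * normH G \<Psi>'" unfolding \<Phi>z_def \<Xi>_def by (simp add: normH_C normH_negC)
    have LPhi: "L2H G \<Phi>" using Dmax_L2H[OF D] by blast
    have LXc: "L2H G Xc" using Dmax_L2H[OF DX] by blast
    have LPsi': "L2H G \<Psi>'"
      using L2H_lin[OF L L, of 0 1 0 0 b' 0 0 0]
      by (rule L2H_cong) (simp add: fun_eq_iff \<Psi>'_def)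
    have n2: "normH G \<Phi> \<le> sqrt (max 1 ((cmod \<beta>)\<^sup>2)) * normH G Xc"
    proof (rule normH_le[OF LXc LPhi])
      show "0 \<le> max 1 ((cmod \<beta>)\<^sup>2)" by simp
      fix j x
      show "(cmod (fst (\<Phi> j x)))\<^sup>2 + (cmod (snd (\<Phi> j x)))\<^sup>2 \<le>
            max 1 ((cmod \<beta>)\<^sup>2) * ((cmod (fst (Xc j x)))\<^sup>2 + (cmod (snd (Xc j x)))\<^sup>2)"
        using pt_bound1[of "fst (\<Phi> j x)" \<beta> "b' * snd (\<Phi> j x)"] by (simp add: Xc_def bb2)
    qed
    have n3: "normH G \<Psi>' \<le> sqrt (max 1 ((cmod b')\<^sup>2)) * normH G \<Psi>"
    proof (rule normH_le[OF L LPsi'])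
      show "0 \<le> max 1 ((cmod b')\<^sup>2)" by simp
      fix j x
      show "(cmod (fst (\<Psi>' j x)))\<^sup>2 + (cmod (snd (\<Psi>' j x)))\<^sup>2 \<le>
            max 1 ((cmod b')\<^sup>2) * ((cmod (fst (\<Psi> j x)))\<^sup>2 + (cmod (snd (\<Psi> j x)))\<^sup>2)"
        using pt_bound1[of "snd (\<Psi> j x)" b' "fst (\<Psi> j x)"] by (simp add: \<Psi>'_def algebra_simps)
    qed
    have s1: "0 \<le> sqrt (max 1 ((cmod \<beta>)\<^sup>2))" by simp
    have "normH G \<Phi> \<le> sqrt (max 1 ((cmod \<beta>)\<^sup>2)) * (c * normH G \<Psi>')"
      using n2 mult_left_mono[OF n1 s1] by linarith
    also have "\<dots> \<le> sqrt (max 1 ((cmod \<beta>)\<^sup>2)) * (c * (sqrt (max 1 ((cmod b')\<^sup>2)) * normH G \<Psi>))"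
      by (intro mult_left_mono n3 s1 c0)
    finally show ?thesis by (simp add: K_def mult.assoc)
  qed
  show ?thesis unfolding resolvent_D0_def w_def[symmetric]
    using ex bd by blast
qed

lemma bdpt_closure: "valid_graph G \<Longrightarrow> j \<in> eedges G \<Longrightarrow> bdpt G j \<in> closure (edge_int G j)"
  by (auto simp: edge_int_def valid_graph_def bdpt_def)

lemma lft_closure: "valid_graph G \<Longrightarrow> j \<in> iedges G \<Longrightarrow> lft G j \<in> closure (edge_int G j)"
  by (auto simp: edge_int_def valid_graph_def)

lemma neg_m_not_res: assumes G: "valid_graph G" and m: "m > 0"
  shows "- complex_of_real m \<notin> resolvent_D0 G m"
proof
  let ?M = "complex_of_real m"
  assume z: "- ?M \<in> resolvent_D0 G m"
  obtain c where c0: "c \<ge> 0" and c: "\<forall>\<Phi> \<Psi>. L2H G \<Psi> \<and> D0_rel G m \<Phi> (\<lambda>j x. \<Psi> j x + psc (- ?M) (\<Phi> j x))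
                 \<longrightarrow> normH G \<Phi> \<le> c * normH G \<Psi>"
    using res_bound[OF z] by blast
  obtain j0 where j0: "j0 \<in> edges G" using G by (auto simp: valid_graph_def edges_def)
  show False
  proof (cases "j0 \<in> iedges G")
    case True
    have lr: "lft G j0 < rgt G j0" using G True by (auto simp: valid_graph_def)
    define \<Phi> where "\<Phi> j x = (if j = j0 then (0, 1) else (0::complex, 0::complex))" for j and x :: real
    have W1: "W (edge_int G j) (\<lambda>x. fst (\<Phi> j x)) ((\<lambda>j x. 0) j)" for j
      by (simp add: \<Phi>_def W_zero)
    have W2: "W (edge_int G j) (\<lambda>x. snd (\<Phi> j x)) ((\<lambda>j x. 0) j)" if "j \<in> edges G" for j
    proof (cases "j = j0")
      case True
      have "W {lft G j0<..<rgt G j0} (\<lambda>x. 1 + 0 * complex_of_real x) (\<lambda>x. 0)" by (rule W_affine_int[OF lr])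
      then show ?thesis using True \<open>j0 \<in> iedges G\<close> by (simp add: \<Phi>_def edge_int_def)
    qed (simp add: \<Phi>_def W_zero)
    have "Dmax_rel G m \<Phi> (\<lambda>j x. (- \<i> * 0 + ?M * fst (\<Phi> j x), - \<i> * 0 - ?M * snd (\<Phi> j x)))"
      using Dmax_from_W[of G \<Phi> "\<lambda>j x. 0" "\<lambda>j x. 0" m] W1 W2 by blast
    then have D: "Dmax_rel G m \<Phi> (\<lambda>j x. (0,0) + psc (- ?M) (\<Phi> j x))"
      by (rule Dmax_cong) (simp_all add: fun_eq_iff psc_def \<Phi>_def)
    have g: "Gamma1 G \<Phi> = (\<lambda>j. (0,0))" by (simp add: fun_eq_iff Gamma1_def \<Phi>_def)
    have "normH G \<Phi> \<le> c * normH G (\<lambda>j x. (0,0))"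
      using c[rule_format, of "\<lambda>j x. (0,0)" \<Phi>] L2H_zero[of G] D g unfolding D0_rel_def by blast
    then have "normH G \<Phi> \<le> 0" by (simp add: normH_zero_fun)
    moreover have "H1 G \<Phi>" using D unfolding Dmax_rel_def by blast
    ultimately have "\<Phi> j0 (lft G j0) = (0,0)" using normH_zero_imp'[OF G _ _ j0 lft_closure[OF G True]] by blast
    then show False by (simp add: \<Phi>_def)
  next
    case False
    then have e: "j0 \<in> eedges G" using j0 by (simp add: edges_def)
    define \<epsilon> where "\<epsilon> = 1 / (c + 1)"
    have ep: "\<epsilon> > 0" using c0 by (simp add: \<epsilon>_def)
    have ce: "c * \<epsilon> < 1" using c0 by (simp add: \<epsilon>_def)
    let ?s = "orient G j0" and ?p = "bdpt G j0"
    define f where "f x = 1 * complex_of_real (exp (?s * \<epsilon> * (x - ?p)))" for x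
    define h where "h x = (1 * complex_of_real (?s * \<epsilon>)) * complex_of_real (exp (?s * \<epsilon> * (x - ?p)))" for x
    define \<Phi> where "\<Phi> j x = (if j = j0 then (0, f x) else (0::complex, 0::complex))" for j and x :: real
    define h2 where "h2 j x = (if j = j0 then h x else 0)" for j and x :: real
    have Wf: "W (edge_int G j0) f h" unfolding f_def[abs_def] h_def[abs_def] by (rule W_exp_edge[OF G e ep])
    have W1: "W (edge_int G j) (\<lambda>x. fst (\<Phi> j x)) ((\<lambda>j x. 0) j)" for j
      by (cases "j = j0") (simp_all add: \<Phi>_def W_zero)
    have W2: "W (edge_int G j) (\<lambda>x. snd (\<Phi> j x)) (h2 j)" for j
      by (cases "j = j0") (simp_all add: \<Phi>_def h2_def[abs_def] W_zero Wf)
    have D1: "Dmax_rel G m \<Phi> (\<lambda>j x. (- \<i> * h2 j x + ?M * fst (\<Phi> j x), - \<i> * 0 - ?M * snd (\<Phi> j x)))"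
      using Dmax_from_W[of G \<Phi> "\<lambda>j x. 0" h2 m] W1 W2 by blast
    define \<Psi> where "\<Psi> j x = (- \<i> * h2 j x, 0::complex)" for j x
    have D: "Dmax_rel G m \<Phi> (\<lambda>j x. \<Psi> j x + psc (- ?M) (\<Phi> j x))"
      using D1 by (rule Dmax_cong) (simp_all add: fun_eq_iff psc_def \<Phi>_def \<Psi>_def)
    have g: "Gamma1 G \<Phi> = (\<lambda>j. (0,0))" by (simp add: fun_eq_iff Gamma1_def \<Phi>_def)
    have LPhi: "L2H G \<Phi>" and LD1: "L2H G (\<lambda>j x. (- \<i> * h2 j x + ?M * fst (\<Phi> j x), - \<i> * 0 - ?M * snd (\<Phi> j x)))"
      using Dmax_L2H[OF D1] by blast+
    have LPsi: "L2H G \<Psi>"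
      using L2H_lin[OF LPhi LD1, of 0 0 1 0 0 0 0 0]
      by (rule L2H_cong) (simp add: fun_eq_iff \<Psi>_def \<Phi>_def)
    have n1: "normH G \<Phi> \<le> c * normH G \<Psi>" using c LPsi D g unfolding D0_rel_def by blast
    have n2: "normH G \<Psi> \<le> sqrt (\<epsilon>\<^sup>2) * normH G \<Phi>"
    proof (rule normH_le[OF LPhi LPsi])
      show "0 \<le> \<epsilon>\<^sup>2" by simp
      fix j x
      have s2: "?s * ?s = 1" using orient_cases[OF G e] by auto
      show "(cmod (fst (\<Psi> j x)))\<^sup>2 + (cmod (snd (\<Psi> j x)))\<^sup>2 \<le> \<epsilon>\<^sup>2 * ((cmod (fst (\<Phi> j x)))\<^sup>2 + (cmod (snd (\<Phi> j x)))\<^sup>2)"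
      proof (cases "j = j0")
        case True
        have "cmod (complex_of_real (?s * \<epsilon>)) = \<epsilon>"
          using orient_cases[OF G e] ep by auto
        then show ?thesis using True
          by (simp add: \<Psi>_def \<Phi>_def h2_def h_def f_def norm_mult power_mult_distrib)
      qed (simp add: \<Psi>_def \<Phi>_def h2_def)
    qed
    have "normH G \<Phi> \<le> c * (\<epsilon> * normH G \<Phi>)"
      using n1 mult_left_mono[OF n2 c0] ep by simp
    then have "(1 - c * \<epsilon>) * normH G \<Phi> \<le> 0" by (simp add: algebra_simps)
    then have "normH G \<Phi> \<le> 0" using ce normH_nonneg[of G \<Phi>]
      by (simp add: mult_le_0_iff)
    moreover have "H1 G \<Phi>" using D unfolding Dmax_rel_def by blast
    ultimately have "\<Phi> j0 ?p = (0,0)" using normH_zero_imp'[OF G _ _ j0 bdpt_closure[OF G e]] by blast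
    then show False by (simp add: \<Phi>_def f_def)
  qed
qed

lemma res_sym: assumes G: "valid_graph G" and m: "m \<ge> 0" and z: "z \<in> resolvent_D0 G m"
  and zm: "z \<noteq> complex_of_real m"
  shows "- cnj z \<in> resolvent_D0 G m"
proof (cases "z = - complex_of_real m")
  case True
  then have "m \<noteq> 0" using zm by auto
  then have "m > 0" using m by simp
  then show ?thesis using neg_m_not_res[OF G] z True by blast
next
  case False
  then show ?thesis by (rule res_sym_main[OF G z zm])
qed

lemma Qfun_eq: assumes "valid_graph G" "z \<in> resolvent_D0 G m" "Dmax_rel G m \<Phi> (\<lambda>j x. psc z (\<Phi> j x))"
  shows "Qfun G m z (Gamma1 G \<Phi>) = Gamma2 G \<Phi>"
  unfolding Qfun_def
proof (rule the_equality)
  show "\<exists>\<Phi>'. Dmax_rel G m \<Phi>' (\<lambda>j x. psc z (\<Phi>' j x)) \<and> Gamma1 G \<Phi>' = Gamma1 G \<Phi> \<and> Gamma2 G \<Phi>' = Gamma2 G \<Phi>"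
    using assms(3) by blast
next
  fix \<eta> assume "\<exists>\<Phi>'. Dmax_rel G m \<Phi>' (\<lambda>j x. psc z (\<Phi>' j x)) \<and> Gamma1 G \<Phi>' = Gamma1 G \<Phi> \<and> Gamma2 G \<Phi>' = \<eta>"
  then obtain \<Phi>' where p: "Dmax_rel G m \<Phi>' (\<lambda>j x. psc z (\<Phi>' j x))" "Gamma1 G \<Phi>' = Gamma1 G \<Phi>" "Gamma2 G \<Phi>' = \<eta>"
    by blast
  have "Dmax_rel G m (\<lambda>j x. \<Phi>' j x - \<Phi> j x) (\<lambda>j x. psc z (\<Phi>' j x) - psc z (\<Phi> j x))"
    by (rule Dmax_diff[OF p(1) assms(3)])
  then have d: "Dmax_rel G m (\<lambda>j x. \<Phi>' j x - \<Phi> j x) (\<lambda>j x. psc z (\<Phi>' j x - \<Phi> j x))"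
    by (rule Dmax_cong) (auto simp: fun_eq_iff psc_def algebra_simps)
  have "Gamma1 G (\<lambda>j x. \<Phi>' j x - \<Phi> j x) = (\<lambda>j. (0,0))"
    using p(2) by (simp add: Gamma1_diff zero_prod_def)
  from res_inj[OF assms(1,2) d this] have "(\<lambda>j. Gamma2 G \<Phi>' j - Gamma2 G \<Phi> j) = (\<lambda>j. (0,0))"
    by (simp add: Gamma2_diff)
  then show "\<eta> = Gamma2 G \<Phi>" using p(3) by (auto simp: fun_eq_iff prod_eq_iff)
qed

lemma Dmax_C_eig: assumes "Dmax_rel G m \<Phi> (\<lambda>j x. psc z (\<Phi> j x))"
  shows "Dmax_rel G m (chargeC \<Phi>) (\<lambda>j x. psc (- cnj z) (chargeC \<Phi> j x))"
  using Dmax_C[OF assms] by (rule Dmax_cong) (auto simp: fun_eq_iff chargeC_def psc_def)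

theorem proposition4p19:
  fixes G :: "'j mgraph" and m :: real
  assumes "valid_graph G" and "m \<ge> 0"
  shows "(\<forall>\<Phi>. H1 G \<Phi> \<longrightarrow>
            Gamma1 G (chargeC \<Phi>) = VC G (Gamma2 G \<Phi>) \<and>
            Gamma2 G (chargeC \<Phi>) = VC G (Gamma1 G \<Phi>)) \<and>
         (\<forall>z \<in> resolvent_D0 G m - {complex_of_real m}.
            - cnj z \<in> resolvent_D0 G m \<and>
            bij_betw (Qfun G m z) (bspace G) (bspace G) \<and>
            (\<forall>\<omega>\<in>bspace G. Qfun G m (- cnj z) \<omega> =
                 VC G (inv_into (bspace G) (Qfun G m z) (VC G \<omega>))))"
proof (intro conjI allI impI ballI)
  fix \<Phi> :: "'j \<Rightarrow> real \<Rightarrow> complex \<times> complex"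
  show "Gamma1 G (chargeC \<Phi>) = VC G (Gamma2 G \<Phi>)" by (rule Gamma1_C[OF assms(1)])
  show "Gamma2 G (chargeC \<Phi>) = VC G (Gamma1 G \<Phi>)" by (rule Gamma2_C)
next
  fix z assume zz: "z \<in> resolvent_D0 G m - {complex_of_real m}"
  then have z: "z \<in> resolvent_D0 G m" and zm: "z \<noteq> complex_of_real m" by auto
  show w: "- cnj z \<in> resolvent_D0 G m" by (rule res_sym[OF assms z zm])
  have inj: "inj_on (Qfun G m z) (bspace G)"
  proof (rule inj_onI)
    fix \<omega> \<omega>' assume o: "\<omega> \<in> bspace G" "\<omega>' \<in> bspace G" and q: "Qfun G m z \<omega> = Qfun G m z \<omega>'"
    obtain \<Phi> where \<Phi>: "Dmax_rel G m \<Phi> (\<lambda>j x. psc z (\<Phi> j x))" "Gamma1 G \<Phi> = \<omega>"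
      using res_exist[OF assms(1) z o(1)] by blast
    obtain \<Phi>' where \<Phi>': "Dmax_rel G m \<Phi>' (\<lambda>j x. psc z (\<Phi>' j x))" "Gamma1 G \<Phi>' = \<omega>'"
      using res_exist[OF assms(1) z o(2)] by blast
    have g2: "Gamma2 G \<Phi> = Gamma2 G \<Phi>'"
      using q Qfun_eq[OF assms(1) z \<Phi>(1)] Qfun_eq[OF assms(1) z \<Phi>'(1)] \<Phi>(2) \<Phi>'(2) by simp
    let ?D = "\<lambda>j x. \<Phi> j x - \<Phi>' j x"
    have "Dmax_rel G m ?D (\<lambda>j x. psc z (\<Phi> j x) - psc z (\<Phi>' j x))"
      by (rule Dmax_diff[OF \<Phi>(1) \<Phi>'(1)])
    then have d: "Dmax_rel G m ?D (\<lambda>j x. psc z (?D j x))"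
      by (rule Dmax_cong) (auto simp: fun_eq_iff psc_def algebra_simps)
    have d2: "Gamma2 G ?D = (\<lambda>j. (0,0))" using g2 by (simp add: Gamma2_diff zero_prod_def)
    have "Gamma1 G (chargeC ?D) = (\<lambda>j. (0,0))"
      by (simp add: Gamma1_C[OF assms(1)] d2 VC_zero)
    from res_inj[OF assms(1) w Dmax_C_eig[OF d] this]
    have "VC G (Gamma1 G ?D) = (\<lambda>j. (0,0))" by (simp add: Gamma2_C)
    then have "VC G (VC G (Gamma1 G ?D)) = (\<lambda>j. (0,0))" by (simp add: VC_zero)
    then have "Gamma1 G ?D = (\<lambda>j. (0,0))" using VC_VC[OF assms(1) Gamma1_bspace[OF assms(1)]] by simp
    then show "\<omega> = \<omega>'" using \<Phi>(2) \<Phi>'(2) by (auto simp: Gamma1_diff fun_eq_iff prod_eq_iff)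
  qed
  have img: "Qfun G m z ` bspace G = bspace G"
  proof
    show "Qfun G m z ` bspace G \<subseteq> bspace G"
    proof
      fix \<eta> assume "\<eta> \<in> Qfun G m z ` bspace G"
      then obtain \<omega> where o: "\<omega> \<in> bspace G" "\<eta> = Qfun G m z \<omega>" by blast
      obtain \<Phi> where \<Phi>: "Dmax_rel G m \<Phi> (\<lambda>j x. psc z (\<Phi> j x))" "Gamma1 G \<Phi> = \<omega>"
        using res_exist[OF assms(1) z o(1)] by blast
      show "\<eta> \<in> bspace G" using o Qfun_eq[OF assms(1) z \<Phi>(1)] \<Phi>(2) Gamma2_bspace[OF assms(1)] by simp
    qed
  next
    show "bspace G \<subseteq> Qfun G m z ` bspace G"
    proof
      fix \<eta> assume e: "\<eta> \<in> bspace G"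
      obtain \<Phi> where \<Phi>: "Dmax_rel G m \<Phi> (\<lambda>j x. psc (- cnj z) (\<Phi> j x))" "Gamma1 G \<Phi> = VC G \<eta>"
        using res_exist[OF assms(1) w VC_bspace[OF assms(1)]] by blast
      have e1: "Dmax_rel G m (chargeC \<Phi>) (\<lambda>j x. psc z (chargeC \<Phi> j x))"
        using Dmax_C_eig[OF \<Phi>(1)] by simp
      have "Qfun G m z (Gamma1 G (chargeC \<Phi>)) = \<eta>"
        using Qfun_eq[OF assms(1) z e1] by (simp add: Gamma2_C \<Phi>(2) VC_VC[OF assms(1) e])
      then show "\<eta> \<in> Qfun G m z ` bspace G" using Gamma1_bspace[OF assms(1)] by (metis image_eqI)
    qed
  qed
  show "bij_betw (Qfun G m z) (bspace G) (bspace G)" using inj img by (simp add: bij_betw_def)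
  fix \<omega> assume o: "\<omega> \<in> bspace G"
  let ?\<xi> = "inv_into (bspace G) (Qfun G m z) (VC G \<omega>)"
  have \<xi>: "?\<xi> \<in> bspace G" "Qfun G m z ?\<xi> = VC G \<omega>"
    using img VC_bspace[OF assms(1), of \<omega>] by (metis inv_into_into f_inv_into_f)+
  obtain \<Phi> where \<Phi>: "Dmax_rel G m \<Phi> (\<lambda>j x. psc z (\<Phi> j x))" "Gamma1 G \<Phi> = ?\<xi>"
    using res_exist[OF assms(1) z \<xi>(1)] by blast
  have g2: "Gamma2 G \<Phi> = VC G \<omega>" using Qfun_eq[OF assms(1) z \<Phi>(1)] \<Phi>(2) \<xi>(2) by simp
  have "Qfun G m (- cnj z) (Gamma1 G (chargeC \<Phi>)) = Gamma2 G (chargeC \<Phi>)"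
    by (rule Qfun_eq[OF assms(1) w Dmax_C_eig[OF \<Phi>(1)]])
  then show "Qfun G m (- cnj z) \<omega> = VC G ?\<xi>"
    by (simp add: Gamma1_C[OF assms(1)] Gamma2_C g2 VC_VC[OF assms(1) o] \<Phi>(2))
qed

end
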